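(* Let $(V,g)$ be a Euclidean vector space of dimension $n\ge3$, $N=\frac{(n-1)(n+2)}{2}$, $\theta>-1$. Let $R$ be an algebraic curvature tensor on $V$ with Ricci tensor $\operatorname{Ric}$, and $\mathring{R}$ its induced curvature operator of the second kind with eigenvalue average $\bar\lambda$. (1) If $\mathring{R}\in\mathcal{C}(\alpha,\theta)$ with $1\le\alpha\le n$, then $\operatorname{Ric}\ge\frac{n-1}{\alpha+1}(1-\alpha\theta)\bar\lambda\, g$. (2) If $\mathring{R}\in\mathcal{C}(\alpha,\theta)$ with $n\le\alpha<N$, then $\operatorname{Ric}\ge(n-1)\frac{n^2-n(\alpha\theta+\alpha-1)+2(\alpha\theta-1)}{n^2+n-2(\alpha+1)}\bar\lambda\, g$. Moreover, strict inequalities hold if $\mathring{R}\in\mathring{\mathcal{C}}(\alpha,\theta)$.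
   Context: $S^2_0(V)$ is the space of traceless symmetric two-tensors (dimension $N$). An algebraic curvature tensor is $R\in S^2(\wedge^2V)$ satisfying the first Bianchi identity. $\mathring{R}=\pi\circ\overline{R}:S^2_0(V)\to S^2_0(V)$ with $\overline{R}(h)_{ij}=\sum_{k,l}R_{iklj}h_{kl}$ and $\pi$ the projection onto traceless tensors. For a symmetric operator with eigenvalues $\lambda_1\le\cdots\le\lambda_N$ and average $\bar\lambda$, write $\lambda_1+\cdots+\lambda_\alpha:=\lambda_1+\cdots+\lambda_{[\alpha]}+(\alpha-[\alpha])\lambda_{[\alpha]+1}$; $\mathcal{C}(\alpha,\theta)$ is the cone of symmetric operators on $S^2_0(V)$ with $\alpha^{-1}(\lambda_1+\cdots+\lambda_\alpha)\ge-\theta\bar\lambda$, and $\mathring{\mathcal{C}}(\alpha,\theta)$ its interior. *)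

theory Defs
  imports "HOL-Analysis.Analysis"
begin

text \<open>Coordinates with respect to an orthonormal basis of the Euclidean space (V,g),
  indexed by a finite type 'n with n = CARD('n); g is the identity matrix.\<close>

type_synonym 'n tens2 = "'n \<Rightarrow> 'n \<Rightarrow> real"
type_synonym 'n tens4 = "'n \<Rightarrow> 'n \<Rightarrow> 'n \<Rightarrow> 'n \<Rightarrow> real"

definition alg_curv_tensor :: "('n::finite) tens4 \<Rightarrow> bool" where
  "alg_curv_tensor R \<longleftrightarrow>
     (\<forall>i j k l. R i j k l = - R j i k l \<and> R i j k l = - R i j l k \<and> R i j k l = R k l i j
               \<and> R i j k l + R j k i l + R k i j l = 0)"

text \<open>Convention R(e_i,e_j,e_i,e_j) = sectional curvature; Ric_ik = sum_j R_ijkj.\<close>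
definition ricci :: "('n::finite) tens4 \<Rightarrow> 'n tens2" where
  "ricci R = (\<lambda>i k. \<Sum>j\<in>UNIV. R i j k j)"

definition ric_ge :: "('n::finite) tens4 \<Rightarrow> real \<Rightarrow> bool" where
  "ric_ge R c \<longleftrightarrow> (\<forall>v::'n \<Rightarrow> real.
      (\<Sum>i\<in>UNIV. \<Sum>k\<in>UNIV. ricci R i k * v i * v k) \<ge> c * (\<Sum>i\<in>UNIV. (v i)\<^sup>2))"

definition ric_gt :: "('n::finite) tens4 \<Rightarrow> real \<Rightarrow> bool" where
  "ric_gt R c \<longleftrightarrow> (\<forall>v::'n \<Rightarrow> real. v \<noteq> (\<lambda>_. 0) \<longrightarrow>
      (\<Sum>i\<in>UNIV. \<Sum>k\<in>UNIV. ricci R i k * v i * v k) > c * (\<Sum>i\<in>UNIV. (v i)\<^sup>2))"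

definition S20 :: "('n::finite) tens2 set" where
  "S20 = {h. (\<forall>i j. h i j = h j i) \<and> (\<Sum>i\<in>UNIV. h i i) = 0}"

definition tinner :: "('n::finite) tens2 \<Rightarrow> 'n tens2 \<Rightarrow> real" where
  "tinner h k = (\<Sum>i\<in>UNIV. \<Sum>j\<in>UNIV. h i j * k i j)"

text \<open>N = dim S^2_0(V) = (n-1)(n+2)/2.\<close>
definition dimS20 :: "nat \<Rightarrow> nat" where
  "dimS20 n = (n - 1) * (n + 2) div 2"

definition curv_bar :: "('n::finite) tens4 \<Rightarrow> 'n tens2 \<Rightarrow> 'n tens2" where
  "curv_bar R h = (\<lambda>i j. \<Sum>k\<in>UNIV. \<Sum>l\<in>UNIV. R i k l j * h k l)"

definition tf_proj :: "('n::finite) tens2 \<Rightarrow> 'n tens2" where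
  "tf_proj h = (\<lambda>i j. h i j - (\<Sum>k\<in>UNIV. h k k) / real CARD('n) * (if i = j then 1 else 0))"

definition curv_op2 :: "('n::finite) tens4 \<Rightarrow> 'n tens2 \<Rightarrow> 'n tens2" where
  "curv_op2 R h = tf_proj (curv_bar R h)"

text \<open>lam_0 \<le> ... \<le> lam_(N-1) are the eigenvalues (with multiplicity) of the operator T
  on S^2_0(V): there is an orthonormal basis of S^2_0(V) of eigenvectors (N orthonormal
  elements of the N-dimensional space S^2_0 form a basis).\<close>
definition sorted_eigs :: "(('n::finite) tens2 \<Rightarrow> 'n tens2) \<Rightarrow> (nat \<Rightarrow> real) \<Rightarrow> bool" where
  "sorted_eigs T lam \<longleftrightarrow>
     (\<forall>i j. i \<le> j \<longrightarrow> j < dimS20 CARD('n) \<longrightarrow> lam i \<le> lam j) \<and>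
     (\<exists>e::nat \<Rightarrow> 'n tens2.
        (\<forall>k < dimS20 CARD('n). e k \<in> S20 \<and> T (e k) = (\<lambda>i j. lam k * e k i j)) \<and>
        (\<forall>k < dimS20 CARD('n). \<forall>l < dimS20 CARD('n).
            tinner (e k) (e l) = (if k = l then 1 else 0)))"

definition eigs :: "(('n::finite) tens2 \<Rightarrow> 'n tens2) \<Rightarrow> nat \<Rightarrow> real" where
  "eigs T = (SOME lam. sorted_eigs T lam)"

definition eig_avg :: "(('n::finite) tens2 \<Rightarrow> 'n tens2) \<Rightarrow> real" where
  "eig_avg T = (\<Sum>k < dimS20 CARD('n). eigs T k) / real (dimS20 CARD('n))"

text \<open>lam_1 + ... + lam_alpha (1-indexed in the paper, 0-indexed here).\<close>
definition partial_eig_sum :: "(nat \<Rightarrow> real) \<Rightarrow> real \<Rightarrow> real" where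
  "partial_eig_sum lam a =
     (\<Sum>k < nat \<lfloor>a\<rfloor>. lam k) + (a - of_int \<lfloor>a\<rfloor>) * lam (nat \<lfloor>a\<rfloor>)"

definition in_cone :: "(('n::finite) tens2 \<Rightarrow> 'n tens2) \<Rightarrow> real \<Rightarrow> real \<Rightarrow> bool" where
  "in_cone T a \<theta> \<longleftrightarrow> partial_eig_sum (eigs T) a / a \<ge> - \<theta> * eig_avg T"

definition in_cone_int :: "(('n::finite) tens2 \<Rightarrow> 'n tens2) \<Rightarrow> real \<Rightarrow> real \<Rightarrow> bool" where
  "in_cone_int T a \<theta> \<longleftrightarrow> partial_eig_sum (eigs T) a / a > - \<theta> * eig_avg T"

end

theory Submission
  imports Defs
begin


lemma spec_step_orth:
  fixes T :: "'a::euclidean_space \<Rightarrow> 'a"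
  assumes lin: "linear T" and sub: "subspace V"
    and sym: "\<forall>x\<in>V. \<forall>y\<in>V. T x \<bullet> y = x \<bullet> T y"
    and xV: "x \<in> V" and minq: "\<forall>z\<in>V. (T x \<bullet> x) * (z \<bullet> z) \<le> T z \<bullet> z"
    and yV: "y \<in> V" and xy: "x \<bullet> y = 0" and xx: "x \<bullet> x = 1"
  shows "T x \<bullet> y = 0"
proof (rule ccontr)
  assume b0: "T x \<bullet> y \<noteq> 0"
  define b where "b = T x \<bullet> y"
  define \<mu> where "\<mu> = T x \<bullet> x"
  define c where "c = T y \<bullet> y - \<mu> * (y \<bullet> y)"
  have key: "0 \<le> 2 * t * b + t * t * c" for t
  proof -
    have zV: "x + t *\<^sub>R y \<in> V" using sub xV yV by (simp add: subspace_add subspace_scale)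
    have "\<mu> * ((x + t *\<^sub>R y) \<bullet> (x + t *\<^sub>R y)) \<le> T (x + t *\<^sub>R y) \<bullet> (x + t *\<^sub>R y)"
      using minq zV \<mu>_def by blast
    moreover have "T y \<bullet> x = b" using sym xV yV b_def by (simp add: inner_commute)
    ultimately show ?thesis
      using xy xx unfolding c_def \<mu>_def b_def
      by (simp add: linear_add[OF lin] linear_scale[OF lin] inner_add_left inner_add_right
          inner_commute algebra_simps)
  qed
  define t where "t = - b / (\<bar>c\<bar> + 1)"
  have pos: "\<bar>c\<bar> + 1 > 0" by simp
  have "2 * t * b + t * t * c \<le> 2 * t * b + t * t * (\<bar>c\<bar> + 1)"
    by (intro add_left_mono mult_left_mono) auto
  also have "\<dots> = - b * b / (\<bar>c\<bar> + 1)"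
  proof -
    have "t * t * (\<bar>c\<bar> + 1) = b * b / (\<bar>c\<bar> + 1)" using pos unfolding t_def
      by (simp add: divide_simps)
    moreover have "2 * t * b = - 2 * (b * b / (\<bar>c\<bar> + 1))" unfolding t_def by simp
    ultimately show ?thesis by simp
  qed
  also have "\<dots> < 0"
  proof -
    have "b * b > 0" using b0 b_def by (metis not_real_square_gt_zero)
    then show ?thesis using pos by simp
  qed
  finally show False using key[of t] by linarith
qed

lemma spec_eig:
  fixes T :: "'a::euclidean_space \<Rightarrow> 'a"
  assumes lin: "linear T" and sub: "subspace V" and inv: "\<forall>x\<in>V. T x \<in> V"
    and sym: "\<forall>x\<in>V. \<forall>y\<in>V. T x \<bullet> y = x \<bullet> T y"
    and xV: "x \<in> V" and minq: "\<forall>z\<in>V. (T x \<bullet> x) * (z \<bullet> z) \<le> T z \<bullet> z"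
    and xx: "x \<bullet> x = 1"
  shows "T x = (T x \<bullet> x) *\<^sub>R x"
proof -
  define r where "r = T x - (T x \<bullet> x) *\<^sub>R x"
  have rV: "r \<in> V" unfolding r_def using inv xV sub by (simp add: subspace_diff subspace_scale)
  have rx: "x \<bullet> r = 0" unfolding r_def using xx by (simp add: inner_diff_right inner_commute)
  have "T x \<bullet> r = 0" using spec_step_orth[OF lin sub sym xV minq rV rx xx] .
  then have "r \<bullet> r = 0" using rx unfolding r_def by (simp add: inner_diff_left)
  then show ?thesis unfolding r_def by simp
qed

lemma spectral_aux:
  fixes T :: "'a::euclidean_space \<Rightarrow> 'a"
  assumes lin: "linear T"
  shows "\<forall>V. subspace V \<longrightarrow> dim V = d \<longrightarrow> (\<forall>x\<in>V. T x \<in> V) \<longrightarrow>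
    (\<forall>x\<in>V. \<forall>y\<in>V. T x \<bullet> y = x \<bullet> T y) \<longrightarrow>
    (\<exists>e lam. (\<forall>k<d. e k \<in> V \<and> T (e k) = lam k *\<^sub>R e k) \<and>
       (\<forall>k<d. \<forall>l<d. e k \<bullet> e l = (if k = l then 1 else 0)) \<and>
       (\<forall>i j. i \<le> j \<longrightarrow> j < d \<longrightarrow> lam i \<le> (lam j :: real)))"
proof (induction d)
  case 0
  then show ?case by auto
next
  case (Suc m)
  show ?case
  proof (intro allI impI)
    fix V :: "'a set"
    assume sub: "subspace V" and dV: "dim V = Suc m" and inv: "\<forall>x\<in>V. T x \<in> V"
      and sym: "\<forall>x\<in>V. \<forall>y\<in>V. T x \<bullet> y = x \<bullet> T y"
    obtain v where vV: "v \<in> V" and v0: "v \<noteq> 0" using dV dim_eq_0[of V] by auto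
    define S where "S = V \<inter> sphere 0 1"
    have "(v /\<^sub>R norm v) \<in> S" using vV v0 sub unfolding S_def by (simp add: subspace_scale)
    then have Sne: "S \<noteq> {}" by auto
    have Scomp: "compact S" unfolding S_def
      using closed_subspace[OF sub] compact_sphere by (rule closed_Int_compact)
    have bl: "bounded_linear T" using lin by (simp add: linear_conv_bounded_linear)
    have cont: "continuous_on S (\<lambda>z. T z \<bullet> z)"
      by (intro continuous_intros linear_continuous_on[OF bl])
    obtain x where xS: "x \<in> S" and xmin: "\<forall>y\<in>S. T x \<bullet> x \<le> T y \<bullet> y"
      using continuous_attains_inf[OF Scomp Sne cont] by blast
    have xV: "x \<in> V" and xx: "x \<bullet> x = 1" using xS unfolding S_def
      by (auto simp: dot_square_norm)
    have minq: "\<forall>z\<in>V. (T x \<bullet> x) * (z \<bullet> z) \<le> T z \<bullet> z"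
    proof
      fix z assume zV: "z \<in> V"
      show "(T x \<bullet> x) * (z \<bullet> z) \<le> T z \<bullet> z"
      proof (cases "z = 0")
        case True
        then show ?thesis using linear_0[OF lin] by simp
      next
        case False
        define w where "w = z /\<^sub>R norm z"
        have "w \<in> S" using zV False sub unfolding S_def w_def by (simp add: subspace_scale)
        then have "T x \<bullet> x \<le> T w \<bullet> w" using xmin by blast
        also have "T w \<bullet> w = (T z \<bullet> z) / (norm z)^2" unfolding w_def
          by (simp add: linear_scale[OF lin] power2_eq_square divide_simps)
        finally have "(T x \<bullet> x) * (norm z)^2 \<le> T z \<bullet> z" using False
          by (simp add: divide_simps)
        then show ?thesis by (simp add: dot_square_norm)
      qed
    qed
    define \<mu> where "\<mu> = T x \<bullet> x"
    have Tx: "T x = \<mu> *\<^sub>R x" using spec_eig[OF lin sub inv sym xV minq xx] \<mu>_def by simp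
    define V' where "V' = {y \<in> V. \<forall>z \<in> span {x}. orthogonal z y}"
    have V'_iff: "y \<in> V' \<longleftrightarrow> y \<in> V \<and> x \<bullet> y = 0" for y
      unfolding V'_def span_singleton orthogonal_def by auto
    have subx: "subspace (span {x})" by simp
    have xsub: "span {x} \<subseteq> V" using xV sub by (simp add: span_minimal)
    have "dim V' + dim (span {x}) = dim V"
      unfolding V'_def by (rule dim_subspace_orthogonal_to_vectors[OF subx sub xsub])
    moreover have "x \<noteq> 0" using xx by auto
    ultimately have dV': "dim V' = m" using dV by simp
    have sub': "subspace V'" unfolding subspace_def
      using sub by (auto simp: V'_iff subspace_add subspace_scale subspace_0 inner_add_right)
    have inv': "\<forall>y\<in>V'. T y \<in> V'"
    proof
      fix y assume "y \<in> V'"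
      then have yV: "y \<in> V" and xy: "x \<bullet> y = 0" using V'_iff by auto
      have "x \<bullet> T y = T x \<bullet> y" using sym xV yV by simp
      also have "\<dots> = 0" using Tx xy by simp
      finally show "T y \<in> V'" using V'_iff inv yV by simp
    qed
    have sym': "\<forall>x\<in>V'. \<forall>y\<in>V'. T x \<bullet> y = x \<bullet> T y" using sym V'_iff by simp
    obtain e' lam' where e'V: "\<forall>k<m. e' k \<in> V' \<and> T (e' k) = lam' k *\<^sub>R e' k"
      and e'o: "\<forall>k<m. \<forall>l<m. e' k \<bullet> e' l = (if k = l then 1 else 0)"
      and e's: "\<forall>i j. i \<le> j \<longrightarrow> j < m \<longrightarrow> lam' i \<le> (lam' j :: real)"
      using Suc.IH sub' dV' inv' sym' by blast
    define e where "e k = (if k = 0 then x else e' (k - 1))" for k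
    define lam where "lam k = (if k = 0 then \<mu> else lam' (k - 1))" for k
    have lam_ge: "\<mu> \<le> lam' k" if "k < m" for k
    proof -
      have ek: "e' k \<in> V" "e' k \<bullet> e' k = 1" using e'V e'o that V'_iff by auto
      then have "\<mu> * 1 \<le> T (e' k) \<bullet> e' k" using minq \<mu>_def by metis
      also have "\<dots> = lam' k" using e'V that ek by simp
      finally show ?thesis by simp
    qed
    show "\<exists>e lam. (\<forall>k<Suc m. e k \<in> V \<and> T (e k) = lam k *\<^sub>R e k) \<and>
       (\<forall>k<Suc m. \<forall>l<Suc m. e k \<bullet> e l = (if k = l then 1 else 0)) \<and>
       (\<forall>i j. i \<le> j \<longrightarrow> j < Suc m \<longrightarrow> lam i \<le> (lam j :: real))"
    proof (intro exI[of _ e] exI[of _ lam] conjI allI impI)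
      fix k assume "k < Suc m"
      then show "e k \<in> V" "T (e k) = lam k *\<^sub>R e k"
        unfolding e_def lam_def using xV Tx e'V V'_iff by auto
    next
      fix k l assume k: "k < Suc m" and l: "l < Suc m"
      show "e k \<bullet> e l = (if k = l then 1 else 0)"
      proof (cases "k = 0"; cases "l = 0")
        assume "k = 0" "l = 0" then show ?thesis using xx e_def by simp
      next
        assume "k = 0" "l \<noteq> 0" then show ?thesis using e'V V'_iff l unfolding e_def by auto
      next
        assume "k \<noteq> 0" "l = 0" then show ?thesis using e'V V'_iff k unfolding e_def
          by (auto simp: inner_commute)
      next
        assume "k \<noteq> 0" "l \<noteq> 0" then show ?thesis using e'o k l unfolding e_def by auto
      qed
    next
      fix i j :: nat assume ij: "i \<le> j" "j < Suc m"
      show "lam i \<le> lam j"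
      proof (cases "i = 0")
        case True
        then show ?thesis using ij lam_ge unfolding lam_def by auto
      next
        case False
        then show ?thesis using ij e's unfolding lam_def by auto
      qed
    qed
  qed
qed

lemma complete_onb:
  fixes E :: "nat \<Rightarrow> 'a::euclidean_space"
  assumes sub: "subspace V" and EV: "\<forall>k<dim V. E k \<in> V"
    and Eo: "\<forall>k<dim V. \<forall>l<dim V. E k \<bullet> E l = (if k = l then 1 else 0)"
    and YV: "Y \<in> V"
  shows "Y = (\<Sum>k<dim V. (Y \<bullet> E k) *\<^sub>R E k)"
proof -
  define d where "d = dim V"
  define B where "B = E ` {..<d}"
  have inj: "inj_on E {..<d}"
  proof (rule inj_onI)
    fix k l assume k: "k \<in> {..<d}" and l: "l \<in> {..<d}" and eq: "E k = E l"
    have "E k \<bullet> E l = 1" using Eo k eq d_def by (metis lessThan_iff)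
    then show "k = l" using Eo k l d_def by (metis lessThan_iff zero_neq_one)
  qed
  have cB: "card B = d" unfolding B_def using inj by (simp add: card_image)
  have indB: "independent B"
  proof (rule pairwise_orthogonal_independent)
    show "pairwise orthogonal B" unfolding pairwise_def B_def orthogonal_def
      using Eo d_def by auto
    show "0 \<notin> B" unfolding B_def using Eo d_def by force
  qed
  have BV: "B \<subseteq> V" unfolding B_def using EV d_def by auto
  have "V \<subseteq> span B" using card_ge_dim_independent[OF BV indB] cB d_def by simp
  then have "Y \<in> span B" using YV by auto
  then obtain u where Yu: "Y = (\<Sum>v\<in>B. u v *\<^sub>R v)"
    using span_finite[of B] unfolding B_def by auto
  have Yu': "Y = (\<Sum>k<d. u (E k) *\<^sub>R E k)"
    using Yu unfolding B_def by (simp add: sum.reindex[OF inj])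
  have coef: "Y \<bullet> E l = u (E l)" if l: "l < d" for l
  proof -
    have "Y \<bullet> E l = (\<Sum>k<d. u (E k) * (E k \<bullet> E l))"
      by (subst Yu') (simp add: inner_sum_left)
    also have "\<dots> = (\<Sum>k<d. if k = l then u (E l) else 0)"
      using Eo l d_def by (intro sum.cong) auto
    also have "\<dots> = u (E l)" using l by simp
    finally show ?thesis .
  qed
  show ?thesis using Yu' coef d_def by (metis (no_types, lifting) lessThan_iff sum.cong)
qed

definition tv :: "('n::finite) tens2 \<Rightarrow> real^'n^'n" where "tv h = (\<chi> i j. h i j)"
definition vt :: "real^('n::finite)^'n \<Rightarrow> 'n tens2" where "vt x = (\<lambda>i j. x$i$j)"

lemma vt_tv[simp]: "vt (tv h) = h" by (simp add: tv_def vt_def)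
lemma tv_vt[simp]: "tv (vt x) = x" by (simp add: tv_def vt_def vec_eq_iff)
lemma inner_tv: "tv h \<bullet> tv k = tinner h k"
  by (simp add: tv_def inner_vec_def tinner_def)
lemma inner_vt: "x \<bullet> y = tinner (vt x) (vt y)"
  by (metis inner_tv tv_vt)



definition sp :: "'n \<Rightarrow> ('n::finite \<Rightarrow> real) \<Rightarrow> 'n tens2" where
  "sp p v = (\<lambda>a b. ((if a = p then v b else 0) + (if b = p then v a else 0)) / 2)"

definition ricq :: "('n::finite) tens4 \<Rightarrow> ('n \<Rightarrow> real) \<Rightarrow> real" where
  "ricq R v = (\<Sum>i\<in>UNIV. \<Sum>k\<in>UNIV. ricci R i k * v i * v k)"

lemma acR_simps:
  assumes "alg_curv_tensor R"
  shows "R i i k l = 0" "R i j k k = 0" "R j i k l = - R i j k l" "R i j l k = - R i j k l"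
    "R k l i j = R i j k l"
  using assms unfolding alg_curv_tensor_def by (metis add.inverse_neutral minus_equation_iff neg_equal_zero)+

lemma sum_rot3: "(\<Sum>a\<in>A. \<Sum>b\<in>B. \<Sum>c\<in>C. f a b c) = (\<Sum>b\<in>B. \<Sum>c\<in>C. \<Sum>a\<in>A. (f a b c :: real))"
  by (subst sum.swap) (simp add: sum.swap[of _ A])

lemma ricq_alt:
  assumes acR: "alg_curv_tensor R"
  shows "(\<Sum>a\<in>UNIV. \<Sum>b\<in>UNIV. \<Sum>c\<in>UNIV. R a c a b * v c * v b) = ricq R v"
    "(\<Sum>a\<in>UNIV. \<Sum>b\<in>UNIV. \<Sum>c\<in>UNIV. R b a c a * v c * v b) = ricq R v"
proof -
  have dd: "R a c a b = R c a b a" for a b c using acR_simps(3,4)[OF acR] by (metis minus_minus)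
  show "(\<Sum>a\<in>UNIV. \<Sum>b\<in>UNIV. \<Sum>c\<in>UNIV. R b a c a * v c * v b) = ricq R v"
    unfolding ricq_def ricci_def by (subst sum_rot3) (simp add: sum_distrib_left mult.commute mult.left_commute)
  show "(\<Sum>a\<in>UNIV. \<Sum>b\<in>UNIV. \<Sum>c\<in>UNIV. R a c a b * v c * v b) = ricq R v"
  proof -
    have "(\<Sum>a\<in>UNIV. \<Sum>b\<in>UNIV. \<Sum>c\<in>UNIV. R a c a b * v c * v b) =
      (\<Sum>a\<in>UNIV. \<Sum>b\<in>UNIV. \<Sum>c\<in>UNIV. R c a b a * v c * v b)" by (intro sum.cong refl, subst dd, rule refl)
    also have "\<dots> = ricq R v"
      unfolding ricq_def ricci_def by (subst sum_rot3, subst sum.swap) (simp add: sum_distrib_left mult.commute mult.left_commute)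
    finally show ?thesis .
  qed
qed

lemma sum_if_const: "(\<Sum>x\<in>A. if P then f x else 0) = (if P then sum f A else (0::real))"
  by auto

lemma
  assumes acR: "alg_curv_tensor R"
  shows "(\<Sum>p\<in>UNIV. tinner (curv_bar R (sp p v)) (sp p v)) = ricq R v / 2"
  unfolding tinner_def curv_bar_def sp_def
  apply (simp add: sum_distrib_left sum_distrib_right add_divide_distrib distrib_left distrib_right sum.distrib
     if_distrib[where f="\<lambda>x. _ * x"] if_distrib[where f="\<lambda>x. x * _"] if_distrib[where f="\<lambda>x. x / _"] sum_if_const acR_simps(1,2)[OF acR] cong: if_cong)
  by (simp add: sum_divide_distrib[symmetric] ricq_alt[OF acR])

definition Idt :: "('n::finite) tens2" where "Idt = (\<lambda>i j. if i = j then 1 else 0)"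
definition ttr :: "('n::finite) tens2 \<Rightarrow> real" where "ttr h = (\<Sum>i\<in>UNIV. h i i)"
definition Yt :: "'n \<Rightarrow> ('n::finite \<Rightarrow> real) \<Rightarrow> 'n tens2" where
  "Yt p v = (\<lambda>a b. sp p v a b - v p / real CARD('n) * Idt a b)"
definition Zt :: "('n::finite \<Rightarrow> real) \<Rightarrow> 'n tens2" where
  "Zt v = (\<lambda>a b. v a * v b - Idt a b / real CARD('n))"
definition nrm :: "('n::finite \<Rightarrow> real) \<Rightarrow> real" where "nrm v = (\<Sum>i\<in>UNIV. (v i)^2)"
definition scal :: "('n::finite) tens4 \<Rightarrow> real" where "scal R = (\<Sum>i\<in>UNIV. ricci R i i)"

lemma ricq_forms:
  assumes acR: "alg_curv_tensor R"
  shows "(\<Sum>p\<in>UNIV. \<Sum>j\<in>UNIV. \<Sum>n\<in>UNIV. R p n n j * v p * v j) = - ricq R v"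
    "(\<Sum>p\<in>UNIV. \<Sum>i\<in>UNIV. \<Sum>n\<in>UNIV. R i n n p * v p * v i) = - ricq R v"
    "(\<Sum>p\<in>UNIV. \<Sum>i\<in>UNIV. \<Sum>n\<in>UNIV. R i p n i * v n * v p) = - ricq R v"
    "(\<Sum>p\<in>UNIV. \<Sum>i\<in>UNIV. \<Sum>n\<in>UNIV. R i n p i * v n * v p) = - ricq R v"
    "(\<Sum>p\<in>UNIV. \<Sum>i\<in>UNIV. \<Sum>n\<in>UNIV. R i n n i * v p * v p) = - scal R * nrm v"
proof -
  have ricsym: "ricci R i k = ricci R k i" for i k
    unfolding ricci_def using acR_simps(5)[OF acR] by metis
  have r4: "R i j k l = - R i j l k" for i j k l using acR_simps(4)[OF acR] by (metis minus_minus)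
  have r3: "R i j k l = - R j i k l" for i j k l using acR_simps(3)[OF acR] by (metis minus_minus)
  show "(\<Sum>p\<in>UNIV. \<Sum>j\<in>UNIV. \<Sum>n\<in>UNIV. R p n n j * v p * v j) = - ricq R v"
  proof -
    have "(\<Sum>p\<in>UNIV. \<Sum>j\<in>UNIV. \<Sum>n\<in>UNIV. R p n n j * v p * v j) = 
       (\<Sum>p\<in>UNIV. \<Sum>j\<in>UNIV. \<Sum>n\<in>UNIV. - (R p n j n * v p * v j))"
      by (intro sum.cong refl) (subst r4, simp)
    then show ?thesis unfolding ricq_def ricci_def
      by (simp add: sum_negf sum_distrib_left sum_distrib_right mult_ac)
  qed
  show "(\<Sum>p\<in>UNIV. \<Sum>i\<in>UNIV. \<Sum>n\<in>UNIV. R i n n p * v p * v i) = - ricq R v"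
  proof -
    have "(\<Sum>p\<in>UNIV. \<Sum>i\<in>UNIV. \<Sum>n\<in>UNIV. R i n n p * v p * v i) = 
       (\<Sum>p\<in>UNIV. \<Sum>i\<in>UNIV. \<Sum>n\<in>UNIV. - (R i n p n * v p * v i))"
      by (intro sum.cong refl) (subst r4, simp)
    also have "\<dots> = (\<Sum>i\<in>UNIV. \<Sum>p\<in>UNIV. \<Sum>n\<in>UNIV. - (R i n p n * v i * v p))"
      by (subst sum.swap) (simp add: mult_ac)
    finally show ?thesis unfolding ricq_def ricci_def
      by (simp add: sum_negf sum_distrib_left sum_distrib_right mult_ac)
  qed
  show "(\<Sum>p\<in>UNIV. \<Sum>i\<in>UNIV. \<Sum>n\<in>UNIV. R i p n i * v n * v p) = - ricq R v"
  proof -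
    have "(\<Sum>p\<in>UNIV. \<Sum>i\<in>UNIV. \<Sum>n\<in>UNIV. R i p n i * v n * v p) = 
       (\<Sum>p\<in>UNIV. \<Sum>i\<in>UNIV. \<Sum>n\<in>UNIV. - (R p i n i * v p * v n))"
      by (intro sum.cong refl) (subst r3, simp)
    also have "\<dots> = (\<Sum>p\<in>UNIV. \<Sum>n\<in>UNIV. \<Sum>i\<in>UNIV. - (R p i n i * v p * v n))"
      by (rule sum.cong[OF refl], rule sum.swap)
    finally show ?thesis unfolding ricq_def ricci_def
      by (simp add: sum_negf sum_distrib_left sum_distrib_right mult_ac)
  qed
  show "(\<Sum>p\<in>UNIV. \<Sum>i\<in>UNIV. \<Sum>n\<in>UNIV. R i n p i * v n * v p) = - ricq R v"
  proof -
    have "(\<Sum>p\<in>UNIV. \<Sum>i\<in>UNIV. \<Sum>n\<in>UNIV. R i n p i * v n * v p) = 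
       (\<Sum>p\<in>UNIV. \<Sum>i\<in>UNIV. \<Sum>n\<in>UNIV. - (R n i p i * v n * v p))"
      by (intro sum.cong refl) (subst r3, simp)
    also have "\<dots> = (\<Sum>n\<in>UNIV. \<Sum>p\<in>UNIV. \<Sum>i\<in>UNIV. - (R n i p i * v n * v p))"
      by (rule sum_rot3[symmetric])
    finally show ?thesis unfolding ricq_def ricci_def
      by (simp add: sum_negf sum_distrib_left sum_distrib_right mult_ac)
  qed
  show "(\<Sum>p\<in>UNIV. \<Sum>i\<in>UNIV. \<Sum>n\<in>UNIV. R i n n i * v p * v p) = - scal R * nrm v"
  proof -
    have "(\<Sum>p\<in>UNIV. \<Sum>i\<in>UNIV. \<Sum>n\<in>UNIV. R i n n i * v p * v p) = 
       (\<Sum>p\<in>UNIV. \<Sum>i\<in>UNIV. \<Sum>n\<in>UNIV. - (R i n i n * (v p)^2))"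
      by (intro sum.cong refl) (subst r4, simp add: power2_eq_square)
    also have "\<dots> = - (\<Sum>p\<in>UNIV. (\<Sum>i\<in>UNIV. \<Sum>n\<in>UNIV. R i n i n) * (v p)^2)"
      by (simp add: sum_negf sum_distrib_right)
    also have "\<dots> = - ((\<Sum>i\<in>UNIV. \<Sum>n\<in>UNIV. R i n i n) * (\<Sum>p\<in>UNIV. (v p)^2))"
      by (simp add: sum_distrib_left)
    finally show ?thesis unfolding scal_def nrm_def ricci_def by simp
  qed
qed

lemma sum_Yt_Q:
  fixes v :: "'n::finite \<Rightarrow> real"
  assumes acR: "alg_curv_tensor R"
  shows "(\<Sum>p\<in>UNIV. tinner (curv_bar R (Yt p v)) (Yt p v)) = (1/2 + 2 / real CARD('n)) * ricq R v - nrm v * scal R / (real CARD('n))^2"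
  unfolding tinner_def curv_bar_def sp_def Yt_def Idt_def
  apply (simp add: sum_distrib_left sum_distrib_right add_divide_distrib diff_divide_distrib distrib_left distrib_right left_diff_distrib right_diff_distrib sum.distrib sum_subtractf
     if_distrib[where f="\<lambda>x. _ * x"] if_distrib[where f="\<lambda>x. x * _"] if_distrib[where f="\<lambda>x. x / _"] sum_if_const acR_simps(1,2)[OF acR] cong: if_cong)
  apply (simp add: sum_divide_distrib[symmetric] ricq_alt[OF acR] ricq_forms[OF acR] power2_eq_square)
  done

lemma card_pos_real: "real CARD('n::finite) > 0" by simp

lemma sum_Yt_norm:
  fixes v :: "'n::finite \<Rightarrow> real"
  shows "(\<Sum>p\<in>UNIV. tinner (Yt p v) (Yt p v)) = ((real CARD('n) + 1) / 2 - 1 / real CARD('n)) * nrm v"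
  unfolding tinner_def sp_def Yt_def Idt_def nrm_def
  apply (simp add: sum_distrib_left sum_distrib_right add_divide_distrib diff_divide_distrib distrib_left distrib_right left_diff_distrib right_diff_distrib sum.distrib sum_subtractf
     if_distrib[where f="\<lambda>x. _ * x"] if_distrib[where f="\<lambda>x. x * _"] if_distrib[where f="\<lambda>x. x / _"] sum_if_const cong: if_cong)
  apply (simp add: power2_eq_square)
  done

lemma Zt_norm:
  fixes v :: "'n::finite \<Rightarrow> real"
  assumes "nrm v = 1"
  shows "tinner (Zt v) (Zt v) = 1 - 1 / real CARD('n)"
proof -
  have pp: "(\<Sum>i\<in>UNIV. \<Sum>j\<in>UNIV. v i * v j * (v i * v j)) = (\<Sum>i\<in>UNIV. (v i)^2) * (\<Sum>j\<in>UNIV. (v j)^2)"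
    by (simp add: sum_product power2_eq_square mult_ac)
  have q: "(\<Sum>i\<in>UNIV. 2 * (v i * v i) / real CARD('n)) = 2 * (\<Sum>i\<in>UNIV. (v i)^2) / real CARD('n)"
    by (simp add: sum_divide_distrib[symmetric] sum_distrib_left power2_eq_square)
  show ?thesis
  using assms unfolding tinner_def Zt_def Idt_def nrm_def
  apply (simp add: sum_distrib_left sum_distrib_right add_divide_distrib diff_divide_distrib distrib_left distrib_right left_diff_distrib right_diff_distrib sum.distrib sum_subtractf
     if_distrib[where f="\<lambda>x. _ * x"] if_distrib[where f="\<lambda>x. x * _"] if_distrib[where f="\<lambda>x. x / _"] sum_if_const cong: if_cong)
  apply (simp add: pp q)
  done
qed

lemma sum_antisym_zero:
  assumes "\<And>i k. f k i = - f i k"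
  shows "(\<Sum>i\<in>UNIV. \<Sum>k\<in>UNIV. f i k) = (0::real)"
proof -
  have "(\<Sum>i\<in>UNIV. \<Sum>k\<in>UNIV. f i k) = (\<Sum>k\<in>UNIV. \<Sum>i\<in>UNIV. f i k)" by (rule sum.swap)
  also have "\<dots> = (\<Sum>k\<in>UNIV. \<Sum>i\<in>UNIV. - f k i)" by (intro sum.cong refl) (rule assms)
  also have "\<dots> = - (\<Sum>k\<in>UNIV. \<Sum>i\<in>UNIV. f k i)" by (simp add: sum_negf)
  finally show ?thesis by simp
qed

lemma Zt_Q:
  fixes v :: "'n::finite \<Rightarrow> real"
  assumes acR: "alg_curv_tensor R"
  shows "tinner (curv_bar R (Zt v)) (Zt v) = 2 * ricq R v / real CARD('n) - scal R / (real CARD('n))^2"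
proof -
  have r4: "R i j k l = - R i j l k" for i j k l using acR_simps(4)[OF acR] by (metis minus_minus)
  have r3: "R i j k l = - R j i k l" for i j k l using acR_simps(3)[OF acR] by (metis minus_minus)
  have Z1: "(\<Sum>i\<in>UNIV. \<Sum>j\<in>UNIV. \<Sum>n\<in>UNIV. \<Sum>na\<in>UNIV. R i n na j * (v n * v na) * (v i * v j)) = 0"
  proof -
    have "(\<Sum>i\<in>UNIV. \<Sum>j\<in>UNIV. \<Sum>n\<in>UNIV. \<Sum>na\<in>UNIV. R i n na j * (v n * v na) * (v i * v j)) =
      (\<Sum>i\<in>UNIV. \<Sum>n\<in>UNIV. \<Sum>j\<in>UNIV. \<Sum>na\<in>UNIV. R i n na j * (v n * v na) * (v i * v j))"
      by (rule sum.cong[OF refl], rule sum.swap)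
    also have "\<dots> = 0"
      by (rule sum_antisym_zero) (simp add: sum_negf[symmetric], intro sum.cong refl, subst r3, simp add: mult_ac)
    finally show ?thesis .
  qed
  have Z2: "(\<Sum>i\<in>UNIV. \<Sum>j\<in>UNIV. \<Sum>n\<in>UNIV. R i n n j * (v i * v j)) = - ricq R v"
    using ricq_forms(1)[OF acR, of v] by (simp add: mult_ac)
  have Z3: "(\<Sum>i\<in>UNIV. \<Sum>k\<in>UNIV. \<Sum>l\<in>UNIV. R i k l i * (v k * v l)) = - ricq R v"
  proof -
    have "(\<Sum>i\<in>UNIV. \<Sum>k\<in>UNIV. \<Sum>l\<in>UNIV. R i k l i * (v k * v l)) =
       (\<Sum>k\<in>UNIV. \<Sum>l\<in>UNIV. \<Sum>i\<in>UNIV. R i k l i * (v k * v l))" by (rule sum_rot3)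
    also have "\<dots> = (\<Sum>k\<in>UNIV. \<Sum>l\<in>UNIV. \<Sum>i\<in>UNIV. - (R k i l i * v k * v l))"
      by (intro sum.cong refl) (subst r3, simp)
    finally show ?thesis unfolding ricq_def ricci_def
      by (simp add: sum_negf sum_distrib_left sum_distrib_right mult_ac)
  qed
  have Z4: "(\<Sum>i\<in>UNIV. \<Sum>k\<in>UNIV. R i k k i) = - scal R"
  proof -
    have "(\<Sum>i\<in>UNIV. \<Sum>k\<in>UNIV. R i k k i) = (\<Sum>i\<in>UNIV. \<Sum>k\<in>UNIV. - R i k i k)"
      by (intro sum.cong refl) (subst r4, simp)
    then show ?thesis unfolding scal_def ricci_def by (simp add: sum_negf)
  qed
  show ?thesis
  unfolding tinner_def curv_bar_def Zt_def Idt_def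
  apply (simp add: sum_distrib_left sum_distrib_right add_divide_distrib diff_divide_distrib distrib_left distrib_right left_diff_distrib right_diff_distrib sum.distrib sum_subtractf
     if_distrib[where f="\<lambda>x. _ * x"] if_distrib[where f="\<lambda>x. x * _"] if_distrib[where f="\<lambda>x. x / _"] sum_if_const acR_simps(1,2)[OF acR] cong: if_cong)
  apply (simp add: Z1 Z2 Z3 Z4 sum_divide_distrib[symmetric] power2_eq_square)
  done
qed



lemma S20_iff: "h \<in> S20 \<longleftrightarrow> (\<forall>i j. h i j = h j i) \<and> ttr h = 0"
  unfolding S20_def ttr_def by simp

lemma Yt_S20: "Yt p v \<in> S20"
  unfolding S20_def Yt_def sp_def Idt_def
  by (auto simp: sum.distrib sum_subtractf add_divide_distrib)

lemma Zt_S20: assumes "nrm v = 1" shows "Zt v \<in> S20"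
  using assms unfolding S20_def Zt_def Idt_def nrm_def
  by (auto simp: sum_subtractf power2_eq_square)

lemma inner_Yt:
  fixes \<phi> :: "('n::finite) tens2"
  assumes "\<phi> \<in> S20"
  shows "tinner \<phi> (Yt p v) = (\<Sum>q\<in>UNIV. \<phi> p q * v q)"
proof -
  have sy: "\<phi> i j = \<phi> j i" for i j using assms unfolding S20_def by auto
  have tr: "(\<Sum>i\<in>UNIV. \<phi> i i) = 0" using assms unfolding S20_def by auto
  have "tinner \<phi> (Yt p v) = (\<Sum>q\<in>UNIV. \<phi> p q * v q) / 2 + (\<Sum>q\<in>UNIV. \<phi> q p * v q) / 2
       - v p / real CARD('n) * (\<Sum>i\<in>UNIV. \<phi> i i)"
    unfolding tinner_def Yt_def sp_def Idt_def
    by (simp add: sum_distrib_left sum_distrib_right add_divide_distrib diff_divide_distrib distrib_left distrib_right left_diff_distrib right_diff_distrib sum.distrib sum_subtractf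
     if_distrib[where f="\<lambda>x. _ * x"] if_distrib[where f="\<lambda>x. x * _"] if_distrib[where f="\<lambda>x. x / _"] sum_if_const sum_divide_distrib[symmetric] mult_ac cong: if_cong)
  then show ?thesis using tr sy by simp
qed

lemma inner_Zt:
  fixes \<phi> :: "('n::finite) tens2"
  assumes "\<phi> \<in> S20"
  shows "tinner \<phi> (Zt v) = (\<Sum>a\<in>UNIV. \<Sum>b\<in>UNIV. \<phi> a b * v a * v b)"
proof -
  have tr: "(\<Sum>i\<in>UNIV. \<phi> i i) = 0" using assms unfolding S20_def by auto
  show ?thesis
    unfolding tinner_def Zt_def Idt_def
    by (simp add: right_diff_distrib sum_subtractf if_distrib[where f="\<lambda>x. _ * x"] sum_divide_distrib[symmetric] tr mult_ac cong: if_cong)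
qed

lemma op_bar:
  assumes "ttr Y = 0"
  shows "tinner (curv_op2 R X) Y = tinner (curv_bar R X) Y"
  using assms unfolding tinner_def curv_op2_def tf_proj_def ttr_def
  by (simp add: left_diff_distrib sum_subtractf if_distrib[where f="\<lambda>x. _ * x"] if_distrib[where f="\<lambda>x. x * _"]
      sum_distrib_left[symmetric] sum_divide_distrib[symmetric] cong: if_cong)

lemma op_S20:
  assumes acR: "alg_curv_tensor R" and "h \<in> S20"
  shows "curv_op2 R h \<in> S20"
proof -
  have sy: "h i j = h j i" for i j using assms unfolding S20_def by auto
  have Rs: "R i k l j = R j l k i" for i j k l
    using acR_simps(3,4,5)[OF acR] by (metis minus_minus)
  have cbs: "curv_bar R h i j = curv_bar R h j i" for i j
  proof -
    have "curv_bar R h i j = (\<Sum>k\<in>UNIV. \<Sum>l\<in>UNIV. R j l k i * h l k)"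
      unfolding curv_bar_def by (intro sum.cong refl) (subst Rs, subst sy, rule refl)
    also have "\<dots> = curv_bar R h j i" unfolding curv_bar_def by (rule sum.swap)
    finally show ?thesis .
  qed
  show ?thesis unfolding S20_def curv_op2_def tf_proj_def
    using cbs by (auto simp: sum_subtractf)
qed

lemma sum_swap4: "(\<Sum>i\<in>A. \<Sum>j\<in>B. \<Sum>a\<in>C. \<Sum>b\<in>D. f i j a b) = (\<Sum>a\<in>C. \<Sum>b\<in>D. \<Sum>i\<in>A. \<Sum>j\<in>B. (f i j a b::real))"
proof -
  have "(\<Sum>i\<in>A. \<Sum>j\<in>B. \<Sum>a\<in>C. \<Sum>b\<in>D. f i j a b) = (\<Sum>i\<in>A. \<Sum>a\<in>C. \<Sum>j\<in>B. \<Sum>b\<in>D. f i j a b)"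
    by (rule sum.cong[OF refl], rule sum.swap)
  also have "\<dots> = (\<Sum>a\<in>C. \<Sum>i\<in>A. \<Sum>j\<in>B. \<Sum>b\<in>D. f i j a b)" by (rule sum.swap)
  also have "\<dots> = (\<Sum>a\<in>C. \<Sum>i\<in>A. \<Sum>b\<in>D. \<Sum>j\<in>B. f i j a b)"
    by (intro sum.cong refl, rule sum.swap)
  also have "\<dots> = (\<Sum>a\<in>C. \<Sum>b\<in>D. \<Sum>i\<in>A. \<Sum>j\<in>B. f i j a b)"
    by (rule sum.cong[OF refl], rule sum.swap)
  finally show ?thesis .
qed

lemma op_sym:
  assumes acR: "alg_curv_tensor R" and h: "h \<in> S20" and k: "k \<in> S20"
  shows "tinner (curv_op2 R h) k = tinner h (curv_op2 R k)"
proof -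
  have tk: "ttr k = 0" and th: "ttr h = 0" using h k S20_iff by auto
  have Rs: "R i a b j = R a i j b" for i j a b
    using acR_simps(3,4)[OF acR] by (metis minus_minus)
  have "tinner (curv_op2 R h) k = tinner (curv_bar R h) k" using op_bar[OF tk] .
  also have "\<dots> = (\<Sum>i\<in>UNIV. \<Sum>j\<in>UNIV. \<Sum>a\<in>UNIV. \<Sum>b\<in>UNIV. R i a b j * h a b * k i j)"
    unfolding tinner_def curv_bar_def by (simp add: sum_distrib_right)
  also have "\<dots> = (\<Sum>a\<in>UNIV. \<Sum>b\<in>UNIV. \<Sum>i\<in>UNIV. \<Sum>j\<in>UNIV. R a i j b * k i j * h a b)"
    by (subst sum_swap4) (intro sum.cong refl, subst Rs, simp add: mult_ac)
  also have "\<dots> = tinner (curv_bar R k) h"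
    unfolding tinner_def curv_bar_def by (simp add: sum_distrib_right)
  also have "\<dots> = tinner (curv_op2 R k) h" using op_bar[OF th] by simp
  finally show ?thesis by (simp add: tinner_def mult.commute)
qed



lemma op_add: "curv_op2 R (\<lambda>i j. x i j + y i j) = (\<lambda>i j. curv_op2 R x i j + curv_op2 R y i j)"
  unfolding curv_op2_def tf_proj_def curv_bar_def
  by (simp add: distrib_left sum.distrib add_divide_distrib algebra_simps)

lemma op_scale: "curv_op2 R (\<lambda>i j. c * x i j) = (\<lambda>i j. c * curv_op2 R x i j)"
  unfolding curv_op2_def tf_proj_def curv_bar_def
  by (simp add: sum_distrib_left algebra_simps)

lemma op_sum:
  fixes f :: "nat \<Rightarrow> ('n::finite) tens2"
  shows "curv_op2 R (\<lambda>i j. \<Sum>k\<in>K. c k * f k i j) = (\<lambda>i j. \<Sum>k\<in>K. c k * curv_op2 R (f k) i j)"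
proof (induction K rule: infinite_finite_induct)
  case (infinite A)
  then show ?case unfolding curv_op2_def tf_proj_def curv_bar_def by simp
next
  case empty
  then show ?case unfolding curv_op2_def tf_proj_def curv_bar_def by simp
next
  case (insert x F)
  have "curv_op2 R (\<lambda>i j. \<Sum>k\<in>insert x F. c k * f k i j) =
        curv_op2 R (\<lambda>i j. c x * f x i j + (\<Sum>k\<in>F. c k * f k i j))"
    using insert by simp
  also have "\<dots> = (\<lambda>i j. c x * curv_op2 R (f x) i j + curv_op2 R (\<lambda>i j. \<Sum>k\<in>F. c k * f k i j) i j)"
    by (subst op_add) (simp add: op_scale)
  also have "\<dots> = (\<lambda>i j. \<Sum>k\<in>insert x F. c k * curv_op2 R (f k) i j)"
    using insert by simp
  finally show ?case .
qed

lemma tinner_sum_right: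
  "tinner Y (\<lambda>i j. \<Sum>k\<in>K. c k * f k i j) = (\<Sum>k\<in>K. c k * tinner Y (f k))"
  unfolding tinner_def by (simp add: sum_distrib_left sum_distrib_right mult_ac sum.swap[of _ K])

lemma tinner_comm: "tinner h k = tinner k h"
  unfolding tinner_def by (simp add: mult.commute)

definition V0 :: "(real^'n::finite^'n) set" where "V0 = {x. vt x \<in> S20}"

lemma vt_add: "vt (x + y) = (\<lambda>i j. vt x i j + vt y i j)" by (simp add: vt_def)
lemma vt_scale: "vt (c *\<^sub>R x) = (\<lambda>i j. c * vt x i j)" by (simp add: vt_def)
lemma vt_sum: "vt (\<Sum>k\<in>K. c k *\<^sub>R E k) = (\<lambda>i j. \<Sum>k\<in>K. c k * vt (E k) i j)"
  by (simp add: vt_def)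
lemma tv_add: "tv (\<lambda>i j. a i j + b i j) = tv a + tv b" by (simp add: tv_def vec_eq_iff)
lemma tv_scale: "tv (\<lambda>i j. c * a i j) = c *\<^sub>R tv a" by (simp add: tv_def vec_eq_iff)

lemma subspace_V0: "subspace V0"
  unfolding subspace_def V0_def S20_def
  by (auto simp: vt_add vt_scale sum.distrib sum_distrib_left[symmetric]) (simp_all add: vt_def)

definition T0 :: "('n::finite) tens4 \<Rightarrow> real^'n^'n \<Rightarrow> real^'n^'n" where
  "T0 R x = tv (curv_op2 R (vt x))"

lemma linear_T0: "linear (T0 R)"
  by (rule linearI) (simp_all add: T0_def vt_add vt_scale op_add op_scale tv_add tv_scale)

definition is_eb :: "('n::finite) tens4 \<Rightarrow> (nat \<Rightarrow> real) \<Rightarrow> (nat \<Rightarrow> 'n tens2) \<Rightarrow> nat \<Rightarrow> bool" where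
  "is_eb R lam e m \<longleftrightarrow> (\<forall>k<m. e k \<in> S20 \<and> curv_op2 R (e k) = (\<lambda>i j. lam k * e k i j)) \<and>
     (\<forall>k<m. \<forall>l<m. tinner (e k) (e l) = (if k = l then 1 else 0))"

lemma spectral_tens:
  fixes R :: "('n::finite) tens4"
  assumes acR: "alg_curv_tensor R"
  shows "\<exists>lam e. is_eb R lam e (dim (V0::(real^'n^'n) set)) \<and>
     (\<forall>i j. i \<le> j \<longrightarrow> j < dim (V0::(real^'n^'n) set) \<longrightarrow> lam i \<le> lam j)"
proof -
  have inv: "\<forall>x\<in>V0. T0 R x \<in> V0" unfolding V0_def T0_def using op_S20[OF acR] by simp
  have sym: "\<forall>x\<in>V0. \<forall>y\<in>V0. T0 R x \<bullet> y = x \<bullet> T0 R y"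
    unfolding V0_def T0_def using op_sym[OF acR] by (simp add: inner_vt)
  obtain E lam where E: "\<forall>k<dim (V0::(real^'n^'n) set). E k \<in> V0 \<and> T0 R (E k) = lam k *\<^sub>R E k"
    and Eo: "\<forall>k<dim (V0::(real^'n^'n) set). \<forall>l<dim (V0::(real^'n^'n) set). E k \<bullet> E l = (if k = l then 1 else 0)"
    and Es: "\<forall>i j. i \<le> j \<longrightarrow> j < dim (V0::(real^'n^'n) set) \<longrightarrow> lam i \<le> lam j"
    using spectral_aux[OF linear_T0, of "dim (V0::(real^'n^'n) set)"] subspace_V0 inv sym by blast
  define e where "e k = vt (E k)" for k
  have "is_eb R lam e (dim (V0::(real^'n^'n) set))"
    unfolding is_eb_def
  proof (intro conjI allI impI)
    fix k assume k: "k < dim (V0::(real^'n^'n) set)"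
    show "e k \<in> S20" using E k unfolding e_def V0_def by auto
    have "vt (T0 R (E k)) = vt (lam k *\<^sub>R E k)" using E k by simp
    then show "curv_op2 R (e k) = (\<lambda>i j. lam k * e k i j)" unfolding e_def T0_def vt_scale by simp
  next
    fix k l assume "k < dim (V0::(real^'n^'n) set)" "l < dim (V0::(real^'n^'n) set)"
    then show "tinner (e k) (e l) = (if k = l then 1 else 0)" using Eo unfolding e_def by (simp add: inner_vt)
  qed
  then show ?thesis using Es by blast
qed

lemma tens_complete:
  fixes e :: "nat \<Rightarrow> ('n::finite) tens2"
  assumes eS: "\<forall>k<dim (V0::(real^'n^'n) set). e k \<in> S20"
    and eo: "\<forall>k<dim (V0::(real^'n^'n) set). \<forall>l<dim (V0::(real^'n^'n) set). tinner (e k) (e l) = (if k = l then 1 else 0)"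
    and Y: "Y \<in> S20"
  shows "Y = (\<lambda>i j. \<Sum>k<dim (V0::(real^'n^'n) set). tinner Y (e k) * e k i j)"
proof -
  define E where "E k = tv (e k)" for k
  have EV: "\<forall>k<dim (V0::(real^'n^'n) set). E k \<in> V0" using eS unfolding E_def V0_def by simp
  have Eo: "\<forall>k<dim (V0::(real^'n^'n) set). \<forall>l<dim (V0::(real^'n^'n) set). E k \<bullet> E l = (if k = l then 1 else 0)"
    using eo unfolding E_def by (simp add: inner_tv)
  have YV: "tv Y \<in> V0" using Y unfolding V0_def by simp
  have "tv Y = (\<Sum>k<dim (V0::(real^'n^'n) set). (tv Y \<bullet> E k) *\<^sub>R E k)"
    by (rule complete_onb[OF subspace_V0 EV Eo YV])
  then have "vt (tv Y) = vt (\<Sum>k<dim (V0::(real^'n^'n) set). (tv Y \<bullet> E k) *\<^sub>R E k)" by simp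
  then show ?thesis unfolding vt_sum by (simp add: E_def inner_tv)
qed



abbreviation dV :: "'n::finite itself \<Rightarrow> nat" where "dV (t::'n itself) \<equiv> dim (V0::(real^'n^'n) set)"

lemma parseval:
  fixes e :: "nat \<Rightarrow> ('n::finite) tens2"
  assumes eb: "is_eb R lam e (dim (V0::(real^'n^'n) set))" and Y: "Y \<in> S20"
  shows "tinner Y Y = (\<Sum>k<dim (V0::(real^'n^'n) set). (tinner Y (e k))^2)"
proof -
  have c: "Y = (\<lambda>i j. \<Sum>k<dim (V0::(real^'n^'n) set). tinner Y (e k) * e k i j)"
    using tens_complete[OF _ _ Y, of e] eb unfolding is_eb_def by blast
  have "tinner Y Y = tinner Y (\<lambda>i j. \<Sum>k<dim (V0::(real^'n^'n) set). tinner Y (e k) * e k i j)"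
    using c by metis
  also have "\<dots> = (\<Sum>k<dim (V0::(real^'n^'n) set). (tinner Y (e k))^2)"
    by (simp add: tinner_sum_right power2_eq_square)
  finally show ?thesis .
qed

lemma qexp:
  fixes e :: "nat \<Rightarrow> ('n::finite) tens2"
  assumes eb: "is_eb R lam e (dim (V0::(real^'n^'n) set))" and Y: "Y \<in> S20"
  shows "tinner (curv_op2 R Y) Y = (\<Sum>k<dim (V0::(real^'n^'n) set). lam k * (tinner Y (e k))^2)"
proof -
  have c: "Y = (\<lambda>i j. \<Sum>k<dim (V0::(real^'n^'n) set). tinner Y (e k) * e k i j)"
    using tens_complete[OF _ _ Y, of e] eb unfolding is_eb_def by blast
  have ev: "\<forall>k<dim (V0::(real^'n^'n) set). curv_op2 R (e k) = (\<lambda>i j. lam k * e k i j)"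
    using eb unfolding is_eb_def by blast
  have "curv_op2 R Y = (\<lambda>i j. \<Sum>k<dim (V0::(real^'n^'n) set). tinner Y (e k) * curv_op2 R (e k) i j)"
    by (subst c) (rule op_sum)
  also have "\<dots> = (\<lambda>i j. \<Sum>k<dim (V0::(real^'n^'n) set). (tinner Y (e k) * lam k) * e k i j)"
    using ev by (intro ext sum.cong refl) (simp add: mult_ac)
  finally have "tinner (curv_op2 R Y) Y = tinner Y (\<lambda>i j. \<Sum>k<dim (V0::(real^'n^'n) set). (tinner Y (e k) * lam k) * e k i j)"
    by (simp add: tinner_comm)
  also have "\<dots> = (\<Sum>k<dim (V0::(real^'n^'n) set). lam k * (tinner Y (e k))^2)"
    by (subst tinner_sum_right) (simp add: power2_eq_square mult_ac)
  finally show ?thesis .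
qed

definition dlt :: "'n \<Rightarrow> 'n \<Rightarrow> real" where "dlt j = (\<lambda>q. if q = j then 1 else 0)"

lemma nrm_dlt: "nrm (dlt j) = 1"
proof -
  show ?thesis unfolding nrm_def dlt_def
    by (subst sum.cong[OF refl, of _ _ "\<lambda>i. if i = j then 1 else 0"]) auto
qed

lemma inner_Yt_dlt: fixes \<phi> :: "('n::finite) tens2" assumes "\<phi> \<in> S20" shows "tinner \<phi> (Yt i (dlt j)) = \<phi> i j"
  using inner_Yt[OF assms] unfolding dlt_def by (simp add: if_distrib cong: if_cong)

lemma dimS20_real: assumes "n \<ge> 1" shows "real (dimS20 n) = (real n - 1) * (real n + 2) / 2"
proof -
  have ev: "even ((n - 1) * (n + 2))" by (cases "even n") (use assms in auto)
  have "real (dimS20 n) = real ((n - 1) * (n + 2)) / 2" unfolding dimS20_def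
    using ev by (simp add: real_of_nat_div)
  also have "\<dots> = (real n - 1) * (real n + 2) / 2"
  proof -
    have "real (n - 1) = real n - 1" using assms by simp
    then show ?thesis by (simp only: of_nat_mult of_nat_add) simp
  qed
  finally show ?thesis .
qed

lemma dim_V0:
  fixes R :: "('n::finite) tens4"
  assumes acR: "alg_curv_tensor R"
  shows "dim (V0::(real^'n^'n) set) = dimS20 CARD('n)"
proof -
  obtain lam e where eb: "is_eb R lam e (dim (V0::(real^'n^'n) set))" using spectral_tens[OF acR] by blast
  define d where "d = dim (V0::(real^'n^'n) set)"
  have eS: "\<forall>k<d. e k \<in> S20" and eo: "\<forall>k<d. tinner (e k) (e k) = 1"
    using eb unfolding is_eb_def d_def by auto
  have "real d = (\<Sum>k<d. tinner (e k) (e k))" using eo by simp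
  also have "\<dots> = (\<Sum>k<d. \<Sum>i\<in>UNIV. \<Sum>j\<in>UNIV. (tinner (Yt i (dlt j)) (e k))^2)"
    using eS unfolding tinner_def by (intro sum.cong refl) (simp add: tinner_comm inner_Yt_dlt power2_eq_square flip: tinner_def)
  also have "\<dots> = (\<Sum>i\<in>UNIV. \<Sum>j\<in>UNIV. \<Sum>k<d. (tinner (Yt i (dlt j)) (e k))^2)"
    by (subst sum.swap) (simp add: sum.swap[of _ "{..<d}"])
  also have "\<dots> = (\<Sum>i\<in>UNIV. \<Sum>j\<in>UNIV. tinner (Yt (i::'n) (dlt (j::'n))) (Yt i (dlt j)))"
  proof (rule sum.cong[OF refl], rule sum.cong[OF refl])
    fix i j
    show "(\<Sum>k<d. (tinner (Yt i (dlt j)) (e k))^2) = tinner (Yt (i::'n) (dlt (j::'n))) (Yt i (dlt j))"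
      unfolding d_def using parseval[OF eb Yt_S20, of i "dlt j"] by simp
  qed
  also have "\<dots> = (\<Sum>j\<in>UNIV. \<Sum>i\<in>UNIV. tinner (Yt (i::'n) (dlt (j::'n))) (Yt i (dlt j)))" by (rule sum.swap)
  also have "\<dots> = (\<Sum>j\<in>(UNIV::'n set). ((real CARD('n) + 1) / 2 - 1 / real CARD('n)))"
    by (simp add: sum_Yt_norm nrm_dlt)
  also have "\<dots> = real CARD('n) * ((real CARD('n) + 1) / 2 - 1 / real CARD('n))" by simp
  also have "\<dots> = (real CARD('n) - 1) * (real CARD('n) + 2) / 2" by (simp add: field_simps)
  also have "\<dots> = real (dimS20 CARD('n))" using dimS20_real[of "CARD('n)"] by simp
  finally show ?thesis unfolding d_def by simp
qed

lemma eigs_ok: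
  fixes R :: "('n::finite) tens4"
  assumes acR: "alg_curv_tensor R"
  shows "sorted_eigs (curv_op2 R) (eigs (curv_op2 R))"
proof -
  obtain lam e where eb: "is_eb R lam e (dim (V0::(real^'n^'n) set))"
     and so: "\<forall>i j. i \<le> j \<longrightarrow> j < dim (V0::(real^'n^'n) set) \<longrightarrow> lam i \<le> lam j"
    using spectral_tens[OF acR] by blast
  have "sorted_eigs (curv_op2 R) lam"
    using eb so dim_V0[OF acR] unfolding sorted_eigs_def is_eb_def by auto
  then show ?thesis unfolding eigs_def by (rule someI[where P="sorted_eigs (curv_op2 R)"])
qed

lemma eigs_eb:
  fixes R :: "('n::finite) tens4"
  assumes acR: "alg_curv_tensor R"
  obtains e where "is_eb R (eigs (curv_op2 R)) e (dim (V0::(real^'n^'n) set))"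
    and "\<forall>i j. i \<le> j \<longrightarrow> j < dimS20 CARD('n) \<longrightarrow> eigs (curv_op2 R) i \<le> eigs (curv_op2 R) j"
  using eigs_ok[OF acR] dim_V0[OF acR] unfolding sorted_eigs_def is_eb_def by auto



lemma tinner_CS: "(tinner X Y)^2 \<le> tinner X X * tinner Y Y"
  using Cauchy_Schwarz_ineq[of "tv X" "tv Y"] by (simp add: inner_tv)

lemma tv_diff: "tv (\<lambda>i j. a i j - b i j) = tv a - tv b" by (simp add: tv_def vec_eq_iff)

lemma pair_bound:
  fixes \<phi> :: "('n::finite) tens2" and v :: "'n \<Rightarrow> real"
  assumes phi: "\<phi> \<in> S20" and pp: "tinner \<phi> \<phi> = 1" and nv: "nrm v = 1"
    and n2: "CARD('n) \<ge> 2"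
  defines "w \<equiv> (\<lambda>p. \<Sum>q\<in>UNIV. \<phi> p q * v q)"
  defines "s \<equiv> (\<Sum>a\<in>UNIV. v a * w a)"
  defines "W \<equiv> (\<Sum>p\<in>UNIV. (w p)^2)"
  shows "s^2 \<le> W" "2 * W - 2 * s^2 + real CARD('n) / (real CARD('n) - 1) * s^2 \<le> 1"
proof -
  have sy: "\<phi> i j = \<phi> j i" for i j using phi unfolding S20_def by auto
  have tr: "(\<Sum>i\<in>UNIV. \<phi> i i) = 0" using phi unfolding S20_def by auto
  have vv: "(\<Sum>a\<in>UNIV. v a * v a) = 1" using nv unfolding nrm_def by (simp add: power2_eq_square)
  have vvc: "(\<Sum>i\<in>UNIV. v i * (v i * c)) = c" for c
  proof -
    have "(\<Sum>i\<in>UNIV. v i * (v i * c)) = (\<Sum>i\<in>UNIV. v i * v i) * c" by (simp add: sum_distrib_left sum_distrib_right mult_ac)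
    then show ?thesis using vv by simp
  qed
  have "s^2 \<le> W * (\<Sum>a\<in>UNIV. (v a)^2)"
    using Cauchy_Schwarz_ineq_sum[of w v UNIV] unfolding s_def W_def by (simp add: mult.commute)
  then show "s^2 \<le> W" using nv unfolding nrm_def by simp
  define X where "X = (\<lambda>a b. v a * w b)"
  define Xt where "Xt = (\<lambda>a b. w a * v b)"
  define V where "V = (\<lambda>a b. v a * v b)"
  define K where "K = (\<lambda>a b. Idt a b - V a b)"
  define \<psi> where "\<psi> = (\<lambda>a b. \<phi> a b - X a b - Xt a b + s * V a b)"
  have wsym: "(\<Sum>a\<in>UNIV. \<phi> a b * v a) = w b" for b unfolding w_def
    by (intro sum.cong refl) (simp add: sy)
  have i1: "tinner \<phi> X = W"
  proof -
    have "tinner \<phi> X = (\<Sum>b\<in>UNIV. w b * (\<Sum>a\<in>UNIV. \<phi> a b * v a))"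
      unfolding tinner_def X_def by (subst sum.swap) (simp add: sum_distrib_left mult_ac)
    then show ?thesis unfolding W_def using wsym by (simp add: power2_eq_square)
  qed
  have i2: "tinner \<phi> Xt = W"
    unfolding tinner_def Xt_def W_def w_def by (simp add: sum_distrib_left sum_distrib_right power2_eq_square mult_ac)
  have i3: "tinner \<phi> V = s"
    unfolding tinner_def V_def s_def w_def by (simp add: sum_distrib_left mult_ac)
  have i4: "tinner X X = W"
  proof -
    have "tinner X X = (\<Sum>a\<in>UNIV. v a * v a) * (\<Sum>b\<in>UNIV. w b * w b)"
      unfolding tinner_def X_def by (simp add: sum_product mult_ac)
    then show ?thesis using vv unfolding W_def by (simp add: power2_eq_square)
  qed
  have i5: "tinner X Xt = s^2" unfolding tinner_def X_def Xt_def s_def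
    by (simp add: power2_eq_square sum_product mult_ac)
  have i6: "tinner X V = s" unfolding tinner_def X_def V_def s_def
    by (simp add: sum_distrib_left[symmetric] sum_distrib_right[symmetric] vv vvc mult_ac)
  have i7: "tinner Xt Xt = W" unfolding tinner_def Xt_def W_def
    by (simp add: sum_distrib_left[symmetric] sum_distrib_right[symmetric] vv vvc power2_eq_square mult_ac)
  have i8: "tinner Xt V = s" unfolding tinner_def Xt_def V_def s_def
    by (simp add: sum_distrib_left[symmetric] sum_distrib_right[symmetric] vv vvc mult_ac)
  have i9: "tinner V V = 1" unfolding tinner_def V_def
    by (simp add: sum_distrib_left[symmetric] sum_distrib_right[symmetric] vv vvc mult_ac)
  have j1: "tinner \<phi> Idt = 0" unfolding tinner_def Idt_def using tr
    by (simp add: if_distrib[where f="\<lambda>x. _ * x"] cong: if_cong)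
  have j2: "tinner X Idt = s" unfolding tinner_def Idt_def X_def s_def
    by (simp add: if_distrib[where f="\<lambda>x. _ * x"] cong: if_cong)
  have j3: "tinner Xt Idt = s" unfolding tinner_def Idt_def Xt_def s_def
    by (simp add: if_distrib[where f="\<lambda>x. _ * x"] mult_ac cong: if_cong)
  have j4: "tinner V Idt = 1" unfolding tinner_def Idt_def V_def using vv
    by (simp add: if_distrib[where f="\<lambda>x. _ * x"] cong: if_cong)
  have j5: "tinner (Idt::'n tens2) Idt = real CARD('n)" unfolding tinner_def Idt_def
    by (simp add: if_distrib[where f="\<lambda>x. _ * x"] cong: if_cong)
  have tpsi: "tv \<psi> = tv \<phi> - tv X - tv Xt + s *\<^sub>R tv V" unfolding \<psi>_def by (simp add: tv_def vec_eq_iff)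
  have tK: "tv K = tv Idt - tv V" unfolding K_def by (simp add: tv_def vec_eq_iff)
  have cm: "tinner a b = tinner b a" for a b :: "'n tens2" by (rule tinner_comm)
  have pp2: "tinner \<psi> \<psi> = 1 - 2 * W + s^2"
  proof -
    have "tinner \<psi> \<psi> = tv \<psi> \<bullet> tv \<psi>" by (simp add: inner_tv)
    also have "\<dots> = tinner \<phi> \<phi> + tinner X X + tinner Xt Xt + s^2 * tinner V V
       - 2 * tinner \<phi> X - 2 * tinner \<phi> Xt + 2 * s * tinner \<phi> V + 2 * tinner X Xt
       - 2 * s * tinner X V - 2 * s * tinner Xt V"
      unfolding tpsi by (simp add: inner_diff_left inner_diff_right inner_add_left inner_add_right inner_tv
         cm[of X \<phi>] cm[of Xt \<phi>] cm[of V \<phi>] cm[of Xt X] cm[of V X] cm[of V Xt] power2_eq_square algebra_simps)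
    finally show ?thesis using i1 i2 i3 i4 i5 i6 i7 i8 i9 pp by (simp add: power2_eq_square)
  qed
  have pk: "tinner \<psi> K = - s"
  proof -
    have "tinner \<psi> K = tv \<psi> \<bullet> tv K" by (simp add: inner_tv)
    also have "\<dots> = tinner \<phi> Idt - tinner X Idt - tinner Xt Idt + s * tinner V Idt
        - tinner \<phi> V + tinner X V + tinner Xt V - s * tinner V V"
      unfolding tpsi tK by (simp add: inner_diff_left inner_diff_right inner_add_left inner_add_right inner_tv algebra_simps)
    finally show ?thesis using i3 i6 i8 i9 j1 j2 j3 j4 by simp
  qed
  have kk: "tinner K K = real CARD('n) - 1"
  proof -
    have "tinner K K = tv K \<bullet> tv K" by (simp add: inner_tv)
    also have "\<dots> = tinner (Idt::'n tens2) Idt - 2 * tinner V Idt + tinner V V"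
      unfolding tK by (simp add: inner_diff_left inner_diff_right inner_tv cm[of Idt V])
    finally show ?thesis using j4 j5 i9 by simp
  qed
  have cs: "s^2 \<le> (1 - 2 * W + s^2) * (real CARD('n) - 1)"
    using tinner_CS[of \<psi> K] pp2 pk kk by simp
  have n1: "real CARD('n) - 1 > 0" using n2 by simp
  have "s^2 / (real CARD('n) - 1) \<le> 1 - 2 * W + s^2" using cs n1 by (simp add: divide_simps)
  moreover have "real CARD('n) / (real CARD('n) - 1) * s^2 = s^2 + s^2 / (real CARD('n) - 1)"
    using n1 by (simp add: field_simps)
  ultimately show "2 * W - 2 * s^2 + real CARD('n) / (real CARD('n) - 1) * s^2 \<le> 1" by linarith
qed



lemma qform_S20:
  fixes e :: "nat \<Rightarrow> ('n::finite) tens2"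
  assumes eb: "is_eb R lam e (dim (V0::(real^'n^'n) set))" and Y: "Y \<in> S20"
  shows "(\<Sum>k<dim (V0::(real^'n^'n) set). lam k * (tinner (e k) Y)^2) = tinner (curv_bar R Y) Y"
proof -
  have "ttr Y = 0" using Y S20_iff by auto
  then show ?thesis using qexp[OF eb Y] op_bar[of Y R Y] by (simp add: tinner_comm)
qed

lemma norm_S20:
  fixes e :: "nat \<Rightarrow> ('n::finite) tens2"
  assumes eb: "is_eb R lam e (dim (V0::(real^'n^'n) set))" and Y: "Y \<in> S20"
  shows "(\<Sum>k<dim (V0::(real^'n^'n) set). (tinner (e k) Y)^2) = tinner Y Y"
  using parseval[OF eb Y] by (simp add: tinner_comm)

lemma ricq_dlt: "ricq R (dlt j) = ricci R j j"
  unfolding ricq_def dlt_def by (simp add: if_distrib[where f="\<lambda>x. _ * x"] if_distrib[where f="\<lambda>x. x * _"] cong: if_cong)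

context
  fixes R :: "('n::finite) tens4" and lam :: "nat \<Rightarrow> real" and e :: "nat \<Rightarrow> 'n tens2" and v :: "'n \<Rightarrow> real"
  assumes acR: "alg_curv_tensor R" and eb: "is_eb R lam e (dim (V0::(real^'n^'n) set))"
    and nv: "nrm v = 1"
begin

definition "NN = dim (V0::(real^'n^'n) set)"
definition "P1 k = 2 * (\<Sum>p\<in>UNIV. (tinner (e k) (Yt p v))^2) - 2 * (tinner (e k) (Zt v))^2"
definition "Ph k = real CARD('n) / (real CARD('n) - 1) * (tinner (e k) (Zt v))^2"

lemma sum_lam_P1: "(\<Sum>k<NN. lam k * P1 k) = ricq R v"
proof -
  have "(\<Sum>k<NN. lam k * P1 k) = 2 * (\<Sum>p\<in>UNIV. \<Sum>k<NN. lam k * (tinner (e k) (Yt p v))^2)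
      - 2 * (\<Sum>k<NN. lam k * (tinner (e k) (Zt v))^2)"
    unfolding P1_def by (simp add: right_diff_distrib sum_subtractf sum_distrib_left sum.swap[of _ "{..<NN}"] mult_ac)
  also have "\<dots> = 2 * (\<Sum>p\<in>UNIV. tinner (curv_bar R (Yt p v)) (Yt p v)) - 2 * tinner (curv_bar R (Zt v)) (Zt v)"
    using qform_S20[OF eb Yt_S20] qform_S20[OF eb Zt_S20[OF nv]] unfolding NN_def by simp
  also have "\<dots> = ricq R v"
    unfolding sum_Yt_Q[OF acR, of v] Zt_Q[OF acR, of v] nv by (simp add: field_simps)
  finally show ?thesis .
qed

lemma sum_P1: "(\<Sum>k<NN. P1 k) = real CARD('n) - 1"
proof -
  have "(\<Sum>k<NN. P1 k) = 2 * (\<Sum>p\<in>UNIV. \<Sum>k<NN. (tinner (e k) (Yt p v))^2)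
      - 2 * (\<Sum>k<NN. (tinner (e k) (Zt v))^2)"
    unfolding P1_def by (simp add: sum_subtractf sum_distrib_left sum.swap[of _ "{..<NN}"])
  also have "\<dots> = 2 * (\<Sum>p\<in>UNIV. tinner (Yt p v) (Yt p v)) - 2 * tinner (Zt v) (Zt v)"
    using norm_S20[OF eb Yt_S20] norm_S20[OF eb Zt_S20[OF nv]] unfolding NN_def by simp
  also have "\<dots> = real CARD('n) - 1"
    unfolding sum_Yt_norm[of v] Zt_norm[OF nv] nv by (simp add: field_simps)
  finally show ?thesis .
qed

lemma sum_lam_Ph: "(\<Sum>k<NN. lam k * Ph k) = real CARD('n) / (real CARD('n) - 1) *
    (2 * ricq R v / real CARD('n) - scal R / (real CARD('n))^2)"
proof -
  have "(\<Sum>k<NN. lam k * Ph k) = real CARD('n) / (real CARD('n) - 1) * (\<Sum>k<NN. lam k * (tinner (e k) (Zt v))^2)"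
    unfolding Ph_def by (simp add: sum_distrib_left mult_ac)
  also have "\<dots> = real CARD('n) / (real CARD('n) - 1) * tinner (curv_bar R (Zt v)) (Zt v)"
    using qform_S20[OF eb Zt_S20[OF nv]] unfolding NN_def by simp
  finally show ?thesis using Zt_Q[OF acR, of v] by simp
qed

lemma sum_Ph: assumes "CARD('n) \<ge> 2" shows "(\<Sum>k<NN. Ph k) = 1"
proof -
  have "(\<Sum>k<NN. Ph k) = real CARD('n) / (real CARD('n) - 1) * (\<Sum>k<NN. (tinner (e k) (Zt v))^2)"
    unfolding Ph_def by (simp add: sum_distrib_left)
  also have "\<dots> = real CARD('n) / (real CARD('n) - 1) * tinner (Zt v) (Zt v)"
    using norm_S20[OF eb Zt_S20[OF nv]] unfolding NN_def by simp
  also have "\<dots> = 1" using Zt_norm[OF nv] assms by (simp add: field_simps)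
  finally show ?thesis .
qed

lemma sum_lam: "(\<Sum>k<NN. lam k) = scal R * (real CARD('n) + 2) / (2 * real CARD('n))"
proof -
  have eS: "\<forall>k<NN. e k \<in> S20" and eo: "\<forall>k<NN. tinner (e k) (e k) = 1"
    using eb unfolding is_eb_def NN_def by auto
  have "(\<Sum>k<NN. lam k) = (\<Sum>k<NN. lam k * tinner (e k) (e k))" using eo by simp
  also have "\<dots> = (\<Sum>k<NN. lam k * (\<Sum>i\<in>UNIV. \<Sum>j\<in>UNIV. (tinner (e k) (Yt i (dlt j)))^2))"
    using eS unfolding tinner_def by (intro sum.cong refl) (simp add: inner_Yt_dlt power2_eq_square flip: tinner_def)
  also have "\<dots> = (\<Sum>i\<in>UNIV. \<Sum>j\<in>UNIV. \<Sum>k<NN. lam k * (tinner (e k) (Yt i (dlt j)))^2)"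
    by (simp add: sum_distrib_left) (subst sum.swap, simp add: sum.swap[of _ "{..<NN}"])
  also have "\<dots> = (\<Sum>i\<in>UNIV. \<Sum>j\<in>UNIV. tinner (curv_bar R (Yt (i::'n) (dlt (j::'n)))) (Yt i (dlt j)))"
  proof (rule sum.cong[OF refl], rule sum.cong[OF refl])
    fix i j
    show "(\<Sum>k<NN. lam k * (tinner (e k) (Yt i (dlt j)))^2) = tinner (curv_bar R (Yt (i::'n) (dlt (j::'n)))) (Yt i (dlt j))"
      using qform_S20[OF eb Yt_S20] unfolding NN_def by simp
  qed
  also have "\<dots> = (\<Sum>j\<in>UNIV. \<Sum>i\<in>UNIV. tinner (curv_bar R (Yt (i::'n) (dlt (j::'n)))) (Yt i (dlt j)))"
    by (rule sum.swap)
  also have "\<dots> = (\<Sum>j\<in>(UNIV::'n set). (1/2 + 2 / real CARD('n)) * ricci R j j - scal R / (real CARD('n))^2)"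
    by (simp add: sum_Yt_Q[OF acR] nrm_dlt ricq_dlt)
  also have "\<dots> = (1/2 + 2 / real CARD('n)) * scal R - real CARD('n) * (scal R / (real CARD('n))^2)"
    unfolding scal_def by (simp add: sum_subtractf sum_distrib_left)
  also have "\<dots> = scal R * (real CARD('n) + 2) / (2 * real CARD('n))"
    by (simp add: field_simps power2_eq_square)
  finally show ?thesis .
qed

lemma P_bounds: assumes "CARD('n) \<ge> 2" and k: "k < NN"
  shows "0 \<le> P1 k" "0 \<le> Ph k" "P1 k + Ph k \<le> 1"
proof -
  have eS: "e k \<in> S20" and eo: "tinner (e k) (e k) = 1" using eb k unfolding is_eb_def NN_def by auto
  define w where "w = (\<lambda>p. \<Sum>q\<in>UNIV. e k p q * v q)"
  define s where "s = (\<Sum>a\<in>UNIV. v a * w a)"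
  define W where "W = (\<Sum>p\<in>UNIV. (w p)^2)"
  have b: "s^2 \<le> W" "2 * W - 2 * s^2 + real CARD('n) / (real CARD('n) - 1) * s^2 \<le> 1"
    using pair_bound[OF eS eo nv assms(1)] unfolding w_def s_def W_def by auto
  have s': "tinner (e k) (Zt v) = s" unfolding s_def w_def inner_Zt[OF eS]
    by (simp add: sum_distrib_left mult_ac)
  have W': "(\<Sum>p\<in>UNIV. (tinner (e k) (Yt p v))^2) = W" unfolding W_def w_def inner_Yt[OF eS] by simp
  have P1e: "P1 k = 2 * W - 2 * s^2" unfolding P1_def s' W' by simp
  have Phe: "Ph k = real CARD('n) / (real CARD('n) - 1) * s^2" unfolding Ph_def s' by simp
  show "0 \<le> P1 k" using b P1e by simp
  show "0 \<le> Ph k" using Phe assms by simp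
  show "P1 k + Ph k \<le> 1" using b P1e Phe by simp
qed

end



lemma rearr:
  fixes lam w :: "nat \<Rightarrow> real"
  assumes so: "\<forall>i j. i \<le> j \<longrightarrow> j < N \<longrightarrow> lam i \<le> lam j"
    and w01: "\<forall>k<N. 0 \<le> w k \<and> w k \<le> 1" and sw: "(\<Sum>k<N. w k) = a"
    and a0: "0 \<le> a" and aN: "a < real N"
  shows "partial_eig_sum lam a \<le> (\<Sum>k<N. lam k * w k)"
proof -
  define m where "m = nat \<lfloor>a\<rfloor>"
  define f where "f = a - of_int \<lfloor>a\<rfloor>"
  have rm: "real m = of_int \<lfloor>a\<rfloor>" unfolding m_def using a0 by simp
  have f01: "0 \<le> f" "f < 1" unfolding f_def by linarith+
  have mN: "m < N" using rm aN by linarith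
  define g where "g k = (if k < m then 1 else if k = m then f else (0::real))" for k
  have split: "(\<Sum>k<N. h k) = (\<Sum>k<m. h k) + h m" if "\<forall>k. m < k \<longrightarrow> h k = 0" for h :: "nat \<Rightarrow> real"
  proof -
    have "(\<Sum>k<N. h k) = (\<Sum>k<Suc m. h k)"
      by (rule sum.mono_neutral_right) (use mN that in auto)
    then show ?thesis by simp
  qed
  have hg: "(\<Sum>k<N. lam k * g k) = partial_eig_sum lam a"
  proof -
    have "(\<Sum>k<N. lam k * g k) = (\<Sum>k<m. lam k * g k) + lam m * g m"
      by (rule split) (simp add: g_def)
    also have "(\<Sum>k<m. lam k * g k) = (\<Sum>k<m. lam k)" by (intro sum.cong refl) (simp add: g_def)
    finally show ?thesis unfolding partial_eig_sum_def g_def f_def m_def by (simp add: mult.commute)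
  qed
  have sg: "(\<Sum>k<N. g k) = a"
  proof -
    have "(\<Sum>k<N. g k) = (\<Sum>k<m. g k) + g m" by (rule split) (simp add: g_def)
    also have "(\<Sum>k<m. g k) = real m" by (simp add: g_def)
    finally show ?thesis using rm unfolding g_def f_def by simp
  qed
  have trm: "lam m * (w k - g k) \<le> lam k * (w k - g k)" if k: "k < N" for k
  proof (cases "k < m")
    case True
    then have "lam k \<le> lam m" using so mN by auto
    moreover have "w k - g k \<le> 0" using True w01 k unfolding g_def by auto
    ultimately show ?thesis by (simp add: mult_right_mono_neg)
  next
    case False
    show ?thesis
    proof (cases "k = m")
      case True then show ?thesis by simp
    next
      case F2: False
      then have "lam m \<le> lam k" using so k False by auto
      moreover have "w k - g k \<ge> 0" using False F2 w01 k unfolding g_def by auto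
      ultimately show ?thesis by (simp add: mult_right_mono)
    qed
  qed
  have "lam m * (\<Sum>k<N. w k - g k) \<le> (\<Sum>k<N. lam k * (w k - g k))"
    unfolding sum_distrib_left using trm by (intro sum_mono) auto
  then have "0 \<le> (\<Sum>k<N. lam k * w k) - (\<Sum>k<N. lam k * g k)"
    using sw sg by (simp add: sum_subtractf right_diff_distrib)
  then show ?thesis using hg by simp
qed



lemma ricq_scale: "ricq R (\<lambda>i. c * v i) = c^2 * ricq R v"
  unfolding ricq_def by (simp add: sum_distrib_left power2_eq_square mult_ac)

lemma nrm_scale: "nrm (\<lambda>i. c * v i) = c^2 * nrm v"
  unfolding nrm_def by (simp add: sum_distrib_left power_mult_distrib)

lemma nrm_zero: "nrm v = 0 \<Longrightarrow> v = (\<lambda>_. 0)"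
  unfolding nrm_def by (rule ext) (simp add: sum_nonneg_eq_0_iff)

lemma nrm_nonneg: "nrm v \<ge> 0" unfolding nrm_def by (simp add: sum_nonneg)

lemma unit_to_ge:
  fixes R :: "('n::finite) tens4"
  assumes "\<forall>u::'n \<Rightarrow> real. nrm u = 1 \<longrightarrow> ricq R u \<ge> c"
  shows "ric_ge R c"
  unfolding ric_ge_def
proof
  fix v :: "'n \<Rightarrow> real"
  show "c * (\<Sum>i\<in>UNIV. (v i)\<^sup>2) \<le> (\<Sum>i\<in>UNIV. \<Sum>k\<in>UNIV. ricci R i k * v i * v k)"
  proof (cases "nrm v = 0")
    case True
    then show ?thesis using nrm_zero[OF True] by simp
  next
    case False
    then have np: "nrm v > 0" using nrm_nonneg[of v] by simp
    define r where "r = sqrt (nrm v)"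
    have r0: "r > 0" unfolding r_def using np by simp
    have r2: "r^2 = nrm v" unfolding r_def using np by simp
    define u where "u = (\<lambda>i. (1 / r) * v i)"
    have nu: "nrm u = 1" unfolding u_def nrm_scale using r2 r0 np by (simp add: power_divide)
    have "ricq R u \<ge> c" using assms nu by blast
    moreover have "ricq R u = ricq R v / nrm v" unfolding u_def ricq_scale using r2 by (simp add: power_divide)
    ultimately have "c * nrm v \<le> ricq R v" using np by (simp add: divide_simps)
    then show ?thesis unfolding nrm_def ricq_def .
  qed
qed

lemma unit_to_gt:
  fixes R :: "('n::finite) tens4"
  assumes "\<forall>u::'n \<Rightarrow> real. nrm u = 1 \<longrightarrow> ricq R u > c"
  shows "ric_gt R c"
  unfolding ric_gt_def
proof (intro allI impI)
  fix v :: "'n \<Rightarrow> real"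
  assume v0: "v \<noteq> (\<lambda>_. 0)"
  have "nrm v \<noteq> 0" using nrm_zero v0 by blast
  then have np: "nrm v > 0" using nrm_nonneg[of v] by simp
  define r where "r = sqrt (nrm v)"
  have r0: "r > 0" unfolding r_def using np by simp
  have r2: "r^2 = nrm v" unfolding r_def using np by simp
  define u where "u = (\<lambda>i. (1 / r) * v i)"
  have nu: "nrm u = 1" unfolding u_def nrm_scale using r2 r0 np by (simp add: power_divide)
  have "ricq R u > c" using assms nu by blast
  moreover have "ricq R u = ricq R v / nrm v" unfolding u_def ricq_scale using r2 by (simp add: power_divide)
  ultimately have "c * nrm v < ricq R v" using np by (simp add: divide_simps)
  then show "c * (\<Sum>i\<in>UNIV. (v i)\<^sup>2) < (\<Sum>i\<in>UNIV. \<Sum>k\<in>UNIV. ricci R i k * v i * v k)"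
    unfolding nrm_def ricq_def .
qed

lemma unit_key:
  fixes R :: "('n::finite) tens4" and v :: "'n \<Rightarrow> real"
  assumes acR: "alg_curv_tensor R" and n3: "CARD('n) \<ge> 3" and nv: "nrm v = 1"
    and al: "0 \<le> \<alpha>" and be: "0 \<le> \<beta>" and ga: "0 \<le> \<gamma>" and ag: "\<alpha> + \<gamma> \<le> 1" and bg: "\<beta> + \<gamma> \<le> 1"
    and sa: "\<alpha> * (real CARD('n) - 1) + \<beta> + \<gamma> * real (dimS20 CARD('n)) = a"
    and a0: "0 \<le> a" and aN: "a < real (dimS20 CARD('n))"
  shows "partial_eig_sum (eigs (curv_op2 R)) a \<le> \<alpha> * ricq R v
      + \<beta> * (2 * ricq R v / (real CARD('n) - 1) - eig_avg (curv_op2 R))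
      + \<gamma> * real (dimS20 CARD('n)) * eig_avg (curv_op2 R)"
proof -
  define lam where "lam = eigs (curv_op2 R)"
  obtain e where eb: "is_eb R lam e (dim (V0::(real^'n^'n) set))"
    and so: "\<forall>i j. i \<le> j \<longrightarrow> j < dimS20 CARD('n) \<longrightarrow> lam i \<le> lam j"
    using eigs_eb[OF acR] unfolding lam_def by blast
  have dV: "dim (V0::(real^'n^'n) set) = dimS20 CARD('n)" by (rule dim_V0[OF acR])
  have NN: "NN TYPE('n) = dimS20 CARD('n)" using NN_def[OF acR eb nv] dV by simp
  define N where "N = dimS20 CARD('n)"
  define n where "n = real CARD('n)"
  have n3': "n \<ge> 3" unfolding n_def using n3 by simp
  have n2: "CARD('n) \<ge> 2" using n3 by simp
  define wt where "wt k = \<alpha> * P1 e v k + \<beta> * Ph e v k + \<gamma>" for k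
  have w01: "\<forall>k<N. 0 \<le> wt k \<and> wt k \<le> 1"
  proof (intro allI impI)
    fix k assume "k < N"
    then have k: "k < NN TYPE('n)" using NN N_def by simp
    note pb = P_bounds[OF acR eb nv n2 k]
    have "0 \<le> wt k" unfolding wt_def using pb al be ga by simp
    moreover have "wt k \<le> 1"
    proof -
      have "(\<alpha> + \<gamma>) * P1 e v k \<le> 1 * P1 e v k" using pb ag by (intro mult_right_mono) auto
      then have x1: "\<alpha> * P1 e v k \<le> P1 e v k - \<gamma> * P1 e v k" by (simp add: algebra_simps)
      have "\<beta> * Ph e v k \<le> (1 - \<gamma>) * Ph e v k" using pb bg by (intro mult_right_mono) auto
      then have x2: "\<beta> * Ph e v k \<le> Ph e v k - \<gamma> * Ph e v k" by (simp add: algebra_simps)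
      have "(1 - \<gamma>) * (P1 e v k + Ph e v k) \<le> (1 - \<gamma>) * 1" using pb ag al by (intro mult_left_mono) auto
      then show ?thesis unfolding wt_def using x1 x2 by (simp add: algebra_simps)
    qed
    ultimately show "0 \<le> wt k \<and> wt k \<le> 1" by simp
  qed
  have sw: "(\<Sum>k<N. wt k) = a"
  proof -
    have "(\<Sum>k<N. wt k) = \<alpha> * (\<Sum>k<NN TYPE('n). P1 e v k) + \<beta> * (\<Sum>k<NN TYPE('n). Ph e v k) + \<gamma> * real N"
      unfolding wt_def NN N_def by (simp add: sum.distrib sum_distrib_left)
    also have "\<dots> = a" using sum_P1[OF acR eb nv] sum_Ph[OF acR eb nv n2] sa N_def by simp
    finally show ?thesis .
  qed
  have aN': "a < real N" using aN N_def by simp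
  have so': "\<forall>i j. i \<le> j \<longrightarrow> j < N \<longrightarrow> lam i \<le> lam j" using so N_def by simp
  have pe: "partial_eig_sum lam a \<le> (\<Sum>k<N. lam k * wt k)" by (rule rearr[OF so' w01 sw a0 aN'])
  define L where "L = (\<Sum>k<N. lam k)"
  have sumlam: "(\<Sum>k<N. lam k * wt k) = \<alpha> * ricq R v + \<beta> * (n / (n - 1) *
    (2 * ricq R v / n - scal R / n^2)) + \<gamma> * L"
  proof -
    have "(\<Sum>k<N. lam k * wt k) = \<alpha> * (\<Sum>k<NN TYPE('n). lam k * P1 e v k) + \<beta> * (\<Sum>k<NN TYPE('n). lam k * Ph e v k)
        + \<gamma> * L"
      unfolding wt_def NN N_def L_def by (simp add: sum.distrib sum_distrib_left distrib_left mult_ac)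
    then show ?thesis using sum_lam_P1[OF acR eb nv] sum_lam_Ph[OF acR eb nv] n_def by simp
  qed
  have Lsc: "L = scal R * (n + 2) / (2 * n)" using sum_lam[OF acR eb nv] NN L_def N_def n_def by simp
  have Nr: "real N = (n - 1) * (n + 2) / 2" unfolding N_def n_def using dimS20_real[of "CARD('n)"] by simp
  have avg: "eig_avg (curv_op2 R) = L / real N" unfolding eig_avg_def L_def N_def lam_def by simp
  have sc: "scal R / (n * (n - 1)) = eig_avg (curv_op2 R)"
  proof -
    have nz: "n \<noteq> 0" "n - 1 \<noteq> 0" "n + 2 \<noteq> 0" using n3' by auto
    have "scal R * (n + 2) / (2 * n) / ((n - 1) * (n + 2) / 2) = scal R / (n * (n - 1))"
      using nz by (simp add: divide_simps)
    then show ?thesis unfolding avg Lsc Nr by simp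
  qed
  have "n / (n - 1) * (2 * ricq R v / n - scal R / n^2) = 2 * ricq R v / (n - 1) - scal R / (n * (n - 1))"
  proof -
    have nz: "n \<noteq> 0" "n - 1 \<noteq> 0" using n3' by auto
    then show ?thesis by (simp add: divide_simps power2_eq_square)
  qed
  also have "\<dots> = 2 * ricq R v / (n - 1) - eig_avg (curv_op2 R)" using sc by simp
  finally have qh: "n / (n - 1) * (2 * ricq R v / n - scal R / n^2) = 2 * ricq R v / (n - 1) - eig_avg (curv_op2 R)" .
  have "(n - 1) * (n + 2) > 0" using n3' by simp
  then have Np: "real N > 0" using Nr by simp
  have "L = real N * eig_avg (curv_op2 R)" using avg Np by simp
  then have "(\<Sum>k<N. lam k * wt k) = \<alpha> * ricq R v + \<beta> * (2 * ricq R v / (n - 1) - eig_avg (curv_op2 R))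
      + \<gamma> * (real N * eig_avg (curv_op2 R))" using sumlam[unfolded qh] by simp
  then show ?thesis using pe unfolding lam_def N_def n_def by (simp add: mult_ac)
qed



theorem proposition3p1:
  fixes R :: "('n::finite) tens4" and a \<theta> :: real
  assumes "CARD('n) \<ge> 3"
      and "\<theta> > -1"
      and "alg_curv_tensor R"
  shows "(1 \<le> a \<and> a \<le> real CARD('n) \<and> in_cone (curv_op2 R) a \<theta> \<longrightarrow>
            ric_ge R ((real CARD('n) - 1) / (a + 1) * (1 - a * \<theta>) * eig_avg (curv_op2 R)))
       \<and> (1 \<le> a \<and> a \<le> real CARD('n) \<and> in_cone_int (curv_op2 R) a \<theta> \<longrightarrow>
            ric_gt R ((real CARD('n) - 1) / (a + 1) * (1 - a * \<theta>) * eig_avg (curv_op2 R)))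
       \<and> (real CARD('n) \<le> a \<and> a < real (dimS20 CARD('n)) \<and> in_cone (curv_op2 R) a \<theta> \<longrightarrow>
            ric_ge R ((real CARD('n) - 1) *
              ((real CARD('n))^2 - real CARD('n) * (a * \<theta> + a - 1) + 2 * (a * \<theta> - 1))
              / ((real CARD('n))^2 + real CARD('n) - 2 * (a + 1)) * eig_avg (curv_op2 R)))
       \<and> (real CARD('n) \<le> a \<and> a < real (dimS20 CARD('n)) \<and> in_cone_int (curv_op2 R) a \<theta> \<longrightarrow>
            ric_gt R ((real CARD('n) - 1) *
              ((real CARD('n))^2 - real CARD('n) * (a * \<theta> + a - 1) + 2 * (a * \<theta> - 1))
              / ((real CARD('n))^2 + real CARD('n) - 2 * (a + 1)) * eig_avg (curv_op2 R)))"
proof -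
  note acR = assms(3)
  define n where "n = real CARD('n)"
  define N where "N = real (dimS20 CARD('n))"
  define lb where "lb = eig_avg (curv_op2 R)"
  define P where "P = partial_eig_sum (eigs (curv_op2 R)) a"
  have n3: "n \<ge> 3" unfolding n_def using assms(1) by simp
  have Nr: "N = (n - 1) * (n + 2) / 2" unfolding N_def n_def using dimS20_real[of "CARD('n)"] by simp
  have Nn: "N - n = (n - 2) * (n + 1) / 2" unfolding Nr by (simp add: field_simps)
  have Nn0: "N - n > 0" unfolding Nn using n3 by simp
  have cone: "P \<ge> - \<theta> * a * lb" if "in_cone (curv_op2 R) a \<theta>" "a > 0"
    using that unfolding in_cone_def P_def lb_def by (simp add: divide_simps mult_ac)
  have cone_int: "P > - \<theta> * a * lb" if "in_cone_int (curv_op2 R) a \<theta>" "a > 0"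
    using that unfolding in_cone_int_def P_def lb_def by (simp add: divide_simps mult_ac)
  have c1: "P \<le> (a + 1) / (n - 1) * ricq R u - lb" if a1: "1 \<le> a" "a \<le> n" and nu: "nrm u = 1" for u
  proof -
    have "P \<le> (a - 1) / (n - 1) * ricq R u + 1 * (2 * ricq R u / (n - 1) - lb) + 0 * N * lb"
      unfolding P_def lb_def N_def n_def
    proof (rule unit_key[OF acR assms(1) nu])
      show "0 \<le> (a - 1) / (real CARD('n) - 1)" using a1 n3 unfolding n_def by simp
      show "(a - 1) / (real CARD('n) - 1) + 0 \<le> 1" using a1 n3 unfolding n_def by (simp add: divide_simps)
      show "(a - 1) / (real CARD('n) - 1) * (real CARD('n) - 1) + 1 + 0 * real (dimS20 CARD('n)) = a"
        using n3 unfolding n_def by simp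
      show "a < real (dimS20 CARD('n))" using a1 Nn0 unfolding N_def n_def by simp
    qed (use a1 in auto)
    also have "\<dots> = (a + 1) / (n - 1) * ricq R u - lb"
    proof -
      have nz: "n - 1 \<noteq> 0" using n3 by simp
      show ?thesis using nz by (simp add: divide_simps) (simp add: algebra_simps)
    qed
    finally show ?thesis .
  qed
  have K1: "ricq R u \<ge> (n - 1) / (a + 1) * (1 - a * \<theta>) * lb"
    if a1: "1 \<le> a" "a \<le> n" and nu: "nrm u = 1" and h: "P \<ge> - \<theta> * a * lb" for u
  proof -
    have "- \<theta> * a * lb + lb \<le> (a + 1) / (n - 1) * ricq R u" using c1[OF a1 nu] h by simp
    then have i: "(n - 1) / (a + 1) * (- \<theta> * a * lb + lb) \<le> (n - 1) / (a + 1) * ((a + 1) / (n - 1) * ricq R u)"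
      using a1 n3 by (intro mult_left_mono) auto
    have "(n - 1) / (a + 1) * (1 - a * \<theta>) * lb = (n - 1) / (a + 1) * (- \<theta> * a * lb + lb)"
      by (simp add: algebra_simps)
    also note i
    also have "(n - 1) / (a + 1) * ((a + 1) / (n - 1) * ricq R u) = ricq R u" using a1 n3 by simp
    finally show ?thesis .
  qed
  have K1s: "ricq R u > (n - 1) / (a + 1) * (1 - a * \<theta>) * lb"
    if a1: "1 \<le> a" "a \<le> n" and nu: "nrm u = 1" and h: "P > - \<theta> * a * lb" for u
  proof -
    have "- \<theta> * a * lb + lb < (a + 1) / (n - 1) * ricq R u" using c1[OF a1 nu] h by simp
    then have i: "(n - 1) / (a + 1) * (- \<theta> * a * lb + lb) < (n - 1) / (a + 1) * ((a + 1) / (n - 1) * ricq R u)"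
      using a1 n3 by (intro mult_strict_left_mono) auto
    have "(n - 1) / (a + 1) * (1 - a * \<theta>) * lb = (n - 1) / (a + 1) * (- \<theta> * a * lb + lb)"
      by (simp add: algebra_simps)
    also note i
    also have "(n - 1) / (a + 1) * ((a + 1) / (n - 1) * ricq R u) = ricq R u" using a1 n3 by simp
    finally show ?thesis .
  qed
  define t where "t = (a - n) / (N - n)"
  define D where "D = n^2 + n - 2 * (a + 1)"
  define num where "num = n^2 - n * (a * \<theta> + a - 1) + 2 * (a * \<theta> - 1)"
  define K where "K = (1 - t) * (n + 1) / (n - 1)"
  have c2: "P \<le> K * ricq R u + (- (1 - t) + t * N) * lb"
    if a2: "n \<le> a" "a < N" and nu: "nrm u = 1" for u
  proof -
    have t0: "0 \<le> t" "t < 1" unfolding t_def using a2 Nn0 by (auto simp: divide_simps)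
    have tNn: "t * (N - n) = a - n" unfolding t_def using Nn0 by simp
    have "P \<le> (1 - t) * ricq R u + (1 - t) * (2 * ricq R u / (n - 1) - lb) + t * N * lb"
      unfolding P_def lb_def N_def n_def
    proof (rule unit_key[OF acR assms(1) nu])
      show "(1 - t) * (real CARD('n) - 1) + (1 - t) + t * real (dimS20 CARD('n)) = a"
        using tNn unfolding n_def N_def by (simp add: algebra_simps)
      show "a < real (dimS20 CARD('n))" using a2 unfolding N_def by simp
      show "0 \<le> a" using a2 n3 by simp
    qed (use t0 in auto)
    also have "\<dots> = K * ricq R u + (- (1 - t) + t * N) * lb"
    proof -
      have nz: "n - 1 \<noteq> 0" using n3 by simp
      show ?thesis unfolding K_def using nz by (simp add: divide_simps) (simp add: algebra_simps)
    qed
    finally show ?thesis .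
  qed
  have Dp: "D > 0" if "a < N" using that unfolding D_def Nr by (simp add: field_simps power2_eq_square)
  have Kp: "K > 0" if "n \<le> a" "a < N"
  proof -
    have "t < 1" unfolding t_def using that Nn0 by (auto simp: divide_simps)
    then show ?thesis unfolding K_def using n3 by simp
  qed
  have Kc: "K * ((n - 1) * num / D * lb) = - \<theta> * a * lb - (- (1 - t) + t * N) * lb"
    if a2: "n \<le> a" "a < N"
  proof -
    have nz: "n - 2 \<noteq> 0" "n - 1 \<noteq> 0" "n + 1 \<noteq> 0" "D \<noteq> 0" using n3 Dp[OF a2(2)] by auto
    have "n * n \<ge> 3 * n" using n3 by (intro mult_right_mono) auto
    then have nn: "n * n \<noteq> n + 2" using n3 by linarith
    have omt: "1 - t = D / ((n - 2) * (n + 1))" unfolding t_def Nn D_def using nz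
      by (simp add: divide_simps) (simp add: algebra_simps power2_eq_square)
    have tN: "t * (1 + N) = (a - n) * n / (n - 2)" unfolding t_def Nn Nr using nz nn
      by (simp add: divide_simps) (simp add: algebra_simps)
    have KD: "K = D / ((n - 2) * (n - 1))" unfolding K_def omt using nz by (simp add: divide_simps)
    have "K * ((n - 1) * num / D * lb) = num * lb / (n - 2)" unfolding KD using nz by (simp add: divide_simps)
    also have "\<dots> = - \<theta> * a * lb + lb - t * (1 + N) * lb" unfolding tN num_def using nz
      by (simp add: divide_simps) (simp add: algebra_simps power2_eq_square)
    also have "\<dots> = - \<theta> * a * lb - (- (1 - t) + t * N) * lb" by (simp add: algebra_simps)
    finally show ?thesis .
  qed
  have K2: "ricq R u \<ge> (n - 1) * num / D * lb"
    if a2: "n \<le> a" "a < N" and nu: "nrm u = 1" and h: "P \<ge> - \<theta> * a * lb" for u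
  proof -
    have "K * ((n - 1) * num / D * lb) \<le> K * ricq R u" unfolding Kc[OF a2] using c2[OF a2 nu] h by simp
    then show ?thesis using Kp[OF a2] mult_le_cancel_left_pos by blast
  qed
  have K2s: "ricq R u > (n - 1) * num / D * lb"
    if a2: "n \<le> a" "a < N" and nu: "nrm u = 1" and h: "P > - \<theta> * a * lb" for u
  proof -
    have "K * ((n - 1) * num / D * lb) < K * ricq R u" unfolding Kc[OF a2] using c2[OF a2 nu] h by simp
    then show ?thesis using Kp[OF a2] mult_less_cancel_left_pos by blast
  qed
  have a1pos: "a > 0" if "1 \<le> a" using that by simp
  have a2pos: "a > 0" if "n \<le> a" using that n3 by simp
  show ?thesis
  proof (intro conjI impI)
    assume h: "1 \<le> a \<and> a \<le> real CARD('n) \<and> in_cone (curv_op2 R) a \<theta>"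
    show "ric_ge R ((real CARD('n) - 1) / (a + 1) * (1 - a * \<theta>) * eig_avg (curv_op2 R))"
      using K1 cone h a1pos unfolding n_def lb_def by (intro unit_to_ge) auto
  next
    assume h: "1 \<le> a \<and> a \<le> real CARD('n) \<and> in_cone_int (curv_op2 R) a \<theta>"
    show "ric_gt R ((real CARD('n) - 1) / (a + 1) * (1 - a * \<theta>) * eig_avg (curv_op2 R))"
      using K1s cone_int h a1pos unfolding n_def lb_def by (intro unit_to_gt) auto
  next
    assume h: "real CARD('n) \<le> a \<and> a < real (dimS20 CARD('n)) \<and> in_cone (curv_op2 R) a \<theta>"
    show "ric_ge R ((real CARD('n) - 1) *
              ((real CARD('n))^2 - real CARD('n) * (a * \<theta> + a - 1) + 2 * (a * \<theta> - 1))
              / ((real CARD('n))^2 + real CARD('n) - 2 * (a + 1)) * eig_avg (curv_op2 R))"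
      using K2 cone h a2pos unfolding n_def lb_def N_def num_def D_def by (intro unit_to_ge) auto
  next
    assume h: "real CARD('n) \<le> a \<and> a < real (dimS20 CARD('n)) \<and> in_cone_int (curv_op2 R) a \<theta>"
    show "ric_gt R ((real CARD('n) - 1) *
              ((real CARD('n))^2 - real CARD('n) * (a * \<theta> + a - 1) + 2 * (a * \<theta> - 1))
              / ((real CARD('n))^2 + real CARD('n) - 2 * (a + 1)) * eig_avg (curv_op2 R))"
      using K2s cone_int h a2pos unfolding n_def lb_def N_def num_def D_def by (intro unit_to_gt) auto
  qed
qed


end
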